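(* Let $g:\mathbb{R}^n\to\mathbb{R}^n$ be polyhedral, convex, order-preserving and additively homogeneous, and let $\eta=\chi(g)$ be its cycle time. Assume that the half-line $w:t\mapsto t\eta+v$ is super-invariant for $g$. Then there exists a unique half-line invariant under $g$ which coincides with $w$ on the set of critical nodes of $g$ (i.e. whose value at $t$ has the same coordinates as $w(t)$ on that set for all $t$ large enough). It is given by $t\mapsto t\eta+\lim_{k\to\infty}\bar g^k(v)$, where $\bar g(y):=\hat g^{\eta}(y)-\eta$.
   Context: $g$ is order-preserving if $x\le y\Rightarrow g(x)\le g(y)$, additively homogeneous if $g(\lambda+x)=\lambda+g(x)$ for $\lambda\in\mathbb{R}$, convex if each coordinate is convex, polyhedral if $\mathbb{R}^n$ is covered by finitely many polyhedra on each of which $g$ is affine. For such $g$ the cycle time $\chi(g)=\lim_{k\to\infty}g^k(x)/k$ exists and is independent of $x$; the recession function $\hat g(\eta)=\lim_{t\to\infty}g(t\eta)/t$ and the tangent at infinity $\hat g^{\eta}(v)=\lim_{t\to\infty}\big(g(t\eta+v)-t\hat g(\eta)\big)$ exist and $g(t\eta+v)=t\hat g(\eta)+\hat g^{\eta}(v)$ for $t$ large. A half-line is a map $t\mapsto t\eta+v$ ($\eta,v\in\mathbb{R}^n$) for $t$ large, identified with its germ at infinity; it is invariant under $g$ if $g(t\eta+v)=(t+1)\eta+v$ for all $t$ large enough, and super-invariant if $g(t\eta+v)\le(t+1)\eta+v$ for all $t$ large enough. Such $g$ admits an invariant half-line, and its slope is $\chi(g)$. Harmonic vector of a map $\phi$: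 $\phi(u)=u$. For a convex order-preserving additively homogeneous $\phi$ with a harmonic vector $u$: $\partial\phi(u)=\{M: \phi(x)-\phi(u)\ge M(x-u)\ \forall x\}$ (stochastic matrices); a recurrence class of $M$ is a final communication class $F$ of $M$ with $M_{FF}$ stochastic; a node is critical for $\phi$ if it belongs to a recurrence class of some $M\in\partial\phi(u)$ (independent of $u$). The critical nodes of $g$ are defined as the critical nodes of $\bar g=\hat g^{\chi(g)}-\chi(g)$ (which has harmonic vector $v'$ whenever $t\mapsto t\chi(g)+v'$ is an invariant half-line of $g$). *)

theory Defs
  imports "HOL-Analysis.Analysis"
begin

text \<open>Maps g : R^n -> R^n are modelled as functions on real^'n ('n a finite index type,
  the coordinates / nodes). The order on real^'n is the componentwise order.\<close>

definition cvec :: "real \<Rightarrow> real^'n" where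
  "cvec c = (\<chi> i. c)"

definition order_preserving :: "(real^'n \<Rightarrow> real^'n) \<Rightarrow> bool" where
  "order_preserving g \<longleftrightarrow> (\<forall>x y. x \<le> y \<longrightarrow> g x \<le> g y)"

definition additively_homogeneous :: "(real^'n \<Rightarrow> real^'n) \<Rightarrow> bool" where
  "additively_homogeneous g \<longleftrightarrow> (\<forall>l x. g (cvec l + x) = cvec l + g x)"

definition coord_convex :: "(real^'n \<Rightarrow> real^'n) \<Rightarrow> bool" where
  "coord_convex g \<longleftrightarrow> (\<forall>i. convex_on UNIV (\<lambda>x. g x $ i))"

definition affine_on_set :: "(real^'n \<Rightarrow> real^'n) \<Rightarrow> (real^'n) set \<Rightarrow> bool" where
  "affine_on_set g S \<longleftrightarrow> (\<exists>(A::real^'n^'n) b. \<forall>x\<in>S. g x = A *v x + b)"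

definition polyhedral_map :: "(real^'n \<Rightarrow> real^'n) \<Rightarrow> bool" where
  "polyhedral_map g \<longleftrightarrow> (\<exists>\<P>. finite \<P> \<and> (\<forall>P\<in>\<P>. polyhedron P \<and> affine_on_set g P)
                                \<and> \<Union>\<P> = UNIV)"

text \<open>Cycle time: the limit of g^k(x)/k, which exists and is independent of x.\<close>
definition cycle_time :: "(real^'n \<Rightarrow> real^'n) \<Rightarrow> real^'n" where
  "cycle_time g = (THE \<eta>. \<forall>x. ((\<lambda>k. (1 / real k) *\<^sub>R (g ^^ k) x) \<longlongrightarrow> \<eta>) sequentially)"

definition recession :: "(real^'n \<Rightarrow> real^'n) \<Rightarrow> real^'n \<Rightarrow> real^'n" where
  "recession g \<eta> = Lim at_top (\<lambda>t::real. (1 / t) *\<^sub>R g (t *\<^sub>R \<eta>))"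

definition tangent_at_infinity :: "(real^'n \<Rightarrow> real^'n) \<Rightarrow> real^'n \<Rightarrow> real^'n \<Rightarrow> real^'n" where
  "tangent_at_infinity g \<eta> v = Lim at_top (\<lambda>t::real. g (t *\<^sub>R \<eta> + v) - t *\<^sub>R recession g \<eta>)"

definition gbar :: "(real^'n \<Rightarrow> real^'n) \<Rightarrow> real^'n \<Rightarrow> real^'n" where
  "gbar g y = tangent_at_infinity g (cycle_time g) y - cycle_time g"

text \<open>Half-lines t |-> t eta + v (germs at infinity).\<close>
definition invariant_halfline :: "(real^'n \<Rightarrow> real^'n) \<Rightarrow> real^'n \<Rightarrow> real^'n \<Rightarrow> bool" where
  "invariant_halfline g \<eta> v \<longleftrightarrow>
     (\<forall>\<^sub>F t in at_top. g (t *\<^sub>R \<eta> + v) = (t + 1) *\<^sub>R \<eta> + v)"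

definition super_invariant_halfline :: "(real^'n \<Rightarrow> real^'n) \<Rightarrow> real^'n \<Rightarrow> real^'n \<Rightarrow> bool" where
  "super_invariant_halfline g \<eta> v \<longleftrightarrow>
     (\<forall>\<^sub>F t in at_top. g (t *\<^sub>R \<eta> + v) \<le> (t + 1) *\<^sub>R \<eta> + v)"

definition stochastic :: "real^'n^'n \<Rightarrow> bool" where
  "stochastic M \<longleftrightarrow> (\<forall>i j. M $ i $ j \<ge> 0) \<and> (\<forall>i. (\<Sum>j\<in>UNIV. M $ i $ j) = 1)"

definition subdiff :: "(real^'n \<Rightarrow> real^'n) \<Rightarrow> real^'n \<Rightarrow> (real^'n^'n) set" where
  "subdiff \<phi> u = {M. stochastic M \<and> (\<forall>x. \<phi> x - \<phi> u \<ge> M *v (x - u))}"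

definition reach :: "real^'n^'n \<Rightarrow> 'n \<Rightarrow> 'n \<Rightarrow> bool" where
  "reach M i j \<longleftrightarrow> (i, j) \<in> {(a, b). M $ a $ b > 0}\<^sup>*"

definition communication_class :: "real^'n^'n \<Rightarrow> 'n set \<Rightarrow> bool" where
  "communication_class M F \<longleftrightarrow> (\<exists>i. F = {j. reach M i j \<and> reach M j i})"

definition recurrence_class :: "real^'n^'n \<Rightarrow> 'n set \<Rightarrow> bool" where
  "recurrence_class M F \<longleftrightarrow> communication_class M F
     \<and> (\<forall>i\<in>F. \<forall>j. j \<notin> F \<longrightarrow> M $ i $ j = 0)
     \<and> (\<forall>i\<in>F. (\<Sum>j\<in>F. M $ i $ j) = 1)"

definition critical_nodes_of :: "(real^'n \<Rightarrow> real^'n) \<Rightarrow> 'n set" where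
  "critical_nodes_of \<phi> = {i. \<exists>u. \<phi> u = u \<and> (\<exists>M\<in>subdiff \<phi> u. \<exists>F. recurrence_class M F \<and> i \<in> F)}"

definition critical_nodes :: "(real^'n \<Rightarrow> real^'n) \<Rightarrow> 'n set" where
  "critical_nodes g = critical_nodes_of (gbar g)"

end

theory Submission
  imports Defs "HOL-Computational_Algebra.Polynomial"
begin


lemma cvec_nth[simp]: "cvec c $ i = c"
  by (simp add: cvec_def)

lemma mv_nth: "(A *v x) $ i = (\<Sum>j\<in>UNIV. A$i$j * x$j)"
  by (simp add: matrix_vector_mult_def)

lemma lin_zero:
  fixes a d K T :: real
  assumes "\<forall>t\<ge>T. \<bar>t*a + d\<bar> \<le> K"
  shows "a = 0"
proof (rule ccontr)
  assume a: "a \<noteq> 0"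
  define t where "t = max T ((\<bar>K\<bar> + \<bar>d\<bar> + 1)/\<bar>a\<bar>)"
  have "t \<ge> T" by (simp add: t_def)
  have "t * \<bar>a\<bar> \<ge> \<bar>K\<bar> + \<bar>d\<bar> + 1"
    using a by (simp add: t_def field_simps max_def)
  have "(\<bar>K\<bar> + \<bar>d\<bar> + 1)/\<bar>a\<bar> \<ge> 0" by simp
  hence t0: "t \<ge> 0" unfolding t_def by linarith
  have "\<bar>t*a\<bar> = t*\<bar>a\<bar>" using t0 by (simp add: abs_mult)
  hence "\<bar>t*a + d\<bar> > K" using \<open>t * \<bar>a\<bar> \<ge> \<bar>K\<bar> + \<bar>d\<bar> + 1\<close> by arith
  thus False using assms \<open>t \<ge> T\<close> by force
qed

lemma lin_zero2:
  fixes a d :: real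
  assumes "\<forall>e>0. \<forall>T. \<exists>t\<ge>T. \<bar>t*a + d\<bar> \<le> e"
  shows "a = 0 \<and> d = 0"
proof -
  have a0: "a = 0"
  proof (rule ccontr)
    assume a: "a \<noteq> 0"
    obtain t where t: "t \<ge> (\<bar>d\<bar> + 2)/\<bar>a\<bar>" "\<bar>t*a + d\<bar> \<le> 1"
      using assms[rule_format, of 1 "(\<bar>d\<bar> + 2)/\<bar>a\<bar>"] by auto
    have "t * \<bar>a\<bar> \<ge> \<bar>d\<bar> + 2" using t a by (simp add: field_simps)
    have "t \<ge> 0" using t(1) by (metis abs_ge_zero add_nonneg_nonneg divide_nonneg_nonneg order_trans zero_le_numeral)
    hence "\<bar>t*a\<bar> \<ge> \<bar>d\<bar> + 2" using \<open>t * \<bar>a\<bar> \<ge> \<bar>d\<bar> + 2\<close> by (simp add: abs_mult)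
    thus False using t by linarith
  qed
  have *: "\<bar>d\<bar> \<le> e" if "e > 0" for e using assms[rule_format, OF that, of 0] a0 by auto
  have "d = 0"
  proof (rule ccontr)
    assume "d \<noteq> 0"
    hence "\<bar>d\<bar> \<le> \<bar>d\<bar>/2" using *[of "\<bar>d\<bar>/2"] by simp
    thus False using \<open>d \<noteq> 0\<close> by simp
  qed
  with a0 show ?thesis by simp
qed

locale opah =
  fixes g :: "real^'n \<Rightarrow> real^'n"
  assumes pm: "polyhedral_map g" and cvx: "coord_convex g"
    and op: "order_preserving g" and ah: "additively_homogeneous g"
begin

lemma mono: "x \<le> y \<Longrightarrow> g x \<le> g y"
  using op by (simp add: order_preserving_def)

lemma hom: "g (cvec l + x) = cvec l + g x"
  using ah by (simp add: additively_homogeneous_def)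

lemma ne:
  assumes "\<forall>j. \<bar>x$j - y$j\<bar> \<le> c"
  shows "\<bar>g x $ i - g y $ i\<bar> \<le> c"
proof -
  have "x \<le> cvec c + y" using assms unfolding less_eq_vec_def by (simp add: abs_le_iff) (metis add.commute diff_le_eq)
  hence 1: "g x \<le> cvec c + g y" using mono hom by metis
  have "y \<le> cvec c + x" using assms unfolding less_eq_vec_def by (simp add: abs_le_iff) (metis add.commute diff_le_eq)
  hence 2: "g y \<le> cvec c + g x" using mono hom by metis
  have "g x$i \<le> c + g y$i" "g y$i \<le> c + g x$i" using 1 2 by (simp_all add: less_eq_vec_def)
  thus ?thesis by (simp add: abs_le_iff)
qed

lemma ne_norm: "\<bar>g x $ i - g y $ i\<bar> \<le> norm (x - y)"
  by (rule ne) (metis component_le_norm_cart vector_minus_component)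

lemma lipschitz: "norm (g x - g y) \<le> real CARD('n) * norm (x - y)"
proof -
  have "norm (g x - g y) \<le> (\<Sum>i\<in>UNIV. \<bar>(g x - g y)$i\<bar>)" by (rule norm_le_l1_cart)
  also have "\<dots> \<le> (\<Sum>i\<in>(UNIV::'n set). norm (x - y))"
    by (rule sum_mono) (simp add: ne_norm)
  finally show ?thesis by simp
qed

lemma cont: "continuous_on S g"
proof -
  have "isCont g x" for x
  proof (rule continuous_at_eps_delta[THEN iffD2], intro allI impI)
    fix e :: real assume e: "e > 0"
    show "\<exists>d>0. \<forall>x'. dist x' x < d \<longrightarrow> dist (g x') (g x) < e"
    proof (intro exI[of _ "e / (real CARD('n) + 1)"] conjI allI impI)
      show "e / (real CARD('n) + 1) > 0" using e by simp
      fix x' assume "dist x' x < e / (real CARD('n) + 1)"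
      hence "norm (x' - x) * (real CARD('n) + 1) < e" by (simp add: dist_norm field_simps)
      moreover have "norm (g x' - g x) \<le> real CARD('n) * norm (x' - x)" by (rule lipschitz)
      moreover have "real CARD('n) * norm (x' - x) \<le> norm (x' - x) * (real CARD('n) + 1)"
        by (simp add: algebra_simps)
      ultimately show "dist (g x') (g x) < e" by (simp add: dist_norm)
    qed
  qed
  thus ?thesis by (simp add: continuous_at_imp_continuous_on)
qed

lemma halfline_aff: "\<exists>A b T. \<forall>t\<ge>T. g (t *\<^sub>R \<eta> + v) = A *v (t *\<^sub>R \<eta> + v) + b"
proof -
  obtain \<P> where P: "finite \<P>" "\<forall>P\<in>\<P>. polyhedron P \<and> affine_on_set g P" "\<Union>\<P> = UNIV"
    using pm unfolding polyhedral_map_def by blast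
  define S where "S P = {t::real. t \<ge> 0 \<and> t *\<^sub>R \<eta> + v \<in> P}" for P
  have "\<exists>P\<in>\<P>. \<forall>T. \<exists>t\<in>S P. t \<ge> T"
  proof (rule ccontr)
    assume "\<not> ?thesis"
    then have "\<forall>P\<in>\<P>. \<exists>T. \<forall>t\<in>S P. t < T" by (meson not_le)
    then obtain Tf where Tf: "\<forall>P\<in>\<P>. \<forall>t\<in>S P. t < Tf P" by metis
    define T where "T = Max (insert 0 (Tf ` \<P>))"
    have T0: "T \<ge> 0" and TP: "\<forall>P\<in>\<P>. Tf P \<le> T" using P(1) by (auto simp: T_def)
    obtain P where "P \<in> \<P>" "T *\<^sub>R \<eta> + v \<in> P" using P(3) by blast
    then have "T \<in> S P" using T0 by (simp add: S_def)
    then show False using Tf \<open>P\<in>\<P>\<close> TP by force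
  qed
  then obtain P where "P\<in>\<P>" and unb: "\<forall>T. \<exists>t\<in>S P. t \<ge> T" by blast
  obtain t0 where t0: "t0 \<in> S P" using unb by blast
  have cP: "convex P" using P(2) \<open>P\<in>\<P>\<close> polyhedron_imp_convex by blast
  have inP: "t *\<^sub>R \<eta> + v \<in> P" if "t \<ge> t0" for t
  proof -
    obtain s where s: "s \<in> S P" "s \<ge> t" using unb by blast
    show ?thesis
    proof (cases "s = t0")
      case True then show ?thesis using s that t0 by (simp add: S_def)
    next
      case False
      then have st: "s > t0" using s that by simp
      define u where "u = (s - t)/(s - t0)"
      define w where "w = (t - t0)/(s - t0)"
      have uw: "u \<ge> 0" "w \<ge> 0" "u + w = 1"
        using st s that by (auto simp: u_def w_def add_divide_distrib[symmetric])
      have m1: "u *\<^sub>R (t0 *\<^sub>R \<eta> + v) + w *\<^sub>R (s *\<^sub>R \<eta> + v) \<in> P"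
        using convexD[OF cP _ _ uw] t0 s(1) by (simp add: S_def)
      have m2: "u *\<^sub>R (t0 *\<^sub>R \<eta> + v) + w *\<^sub>R (s *\<^sub>R \<eta> + v) = (u * t0 + w * s) *\<^sub>R \<eta> + (u + w) *\<^sub>R v"
        by (simp add: algebra_simps)
      have "u*t0 + w * s = ((s-t)*t0 + (t-t0) * s)/(s-t0)" using st by (simp add: u_def w_def add_divide_distrib)
      moreover have "(s-t)*t0 + (t-t0) * s = t*(s-t0)" by (simp add: algebra_simps)
      moreover have "s - t0 \<noteq> 0" using st by simp
      ultimately have m3: "u*t0 + w * s = t" by simp
      show ?thesis using m1 unfolding m2 m3 uw(3) by simp
    qed
  qed
  obtain A b where "\<forall>x\<in>P. g x = A *v x + b" using P(2) \<open>P\<in>\<P>\<close> unfolding affine_on_set_def by blast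
  thus ?thesis using inP by blast
qed

lemma halfline_lin: "\<exists>a c T. \<forall>t\<ge>T. g (t *\<^sub>R \<eta> + v) = t *\<^sub>R a + c"
proof -
  obtain A b T where h: "\<forall>t\<ge>T. g (t *\<^sub>R \<eta> + v) = A *v (t *\<^sub>R \<eta> + v) + b"
    using halfline_aff by blast
  have "\<forall>t\<ge>T. g (t *\<^sub>R \<eta> + v) = t *\<^sub>R (A *v \<eta>) + (A *v v + b)"
    using h by (simp add: matrix_vector_right_distrib matrix_vector_mult_scaleR algebra_simps)
  thus ?thesis by blast
qed

lemma HL: "\<forall>\<^sub>F t in at_top. g (t *\<^sub>R \<eta> + v) = t *\<^sub>R recession g \<eta> + tangent_at_infinity g \<eta> v"
proof -
  obtain a0 c0 T0 where h0: "\<forall>t\<ge>T0. g (t *\<^sub>R \<eta> + 0) = t *\<^sub>R a0 + c0" using halfline_lin by blast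
  obtain a c T where h: "\<forall>t\<ge>T. g (t *\<^sub>R \<eta> + v) = t *\<^sub>R a + c" using halfline_lin by blast
  have "a = a0"
  proof (rule vec_eq_iff[THEN iffD2], rule allI)
    fix i
    have "\<forall>t\<ge>max T T0. \<bar>t*(a$i - a0$i) + (c$i - c0$i)\<bar> \<le> norm v"
    proof (intro allI impI)
      fix t assume "t \<ge> max T T0"
      hence 1: "g(t *\<^sub>R \<eta> + v) = t *\<^sub>R a + c" "g(t *\<^sub>R \<eta> + 0) = t *\<^sub>R a0 + c0" using h h0 by auto
      have "\<bar>g(t *\<^sub>R \<eta> + v)$i - g(t *\<^sub>R \<eta> + 0)$i\<bar> \<le> norm v" using ne_norm[of "t *\<^sub>R \<eta> + v" i "t *\<^sub>R \<eta> + 0"] by simp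
      thus "\<bar>t*(a$i - a0$i) + (c$i - c0$i)\<bar> \<le> norm v" unfolding 1 by (simp add: algebra_simps)
    qed
    from lin_zero[OF this] show "a$i = a0$i" by simp
  qed
  have rec: "recession g \<eta> = a0"
    unfolding recession_def
  proof (rule tendsto_Lim)
    show "\<not> trivial_limit (at_top :: real filter)" by simp
    have "\<forall>\<^sub>F t in at_top. a0 + inverse t *\<^sub>R c0 = (1/t) *\<^sub>R g (t *\<^sub>R \<eta>)"
      using eventually_ge_at_top[of "max T0 1"]
    proof eventually_elim
      case (elim t)
      then have "g (t *\<^sub>R \<eta>) = t *\<^sub>R a0 + c0" using h0 by auto
      thus ?case using elim by (simp add: scaleR_add_right divide_inverse)
    qed
    moreover have "((\<lambda>t. a0 + inverse t *\<^sub>R c0) \<longlongrightarrow> a0 + 0 *\<^sub>R c0) at_top"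
      by (intro tendsto_intros tendsto_inverse_0_at_top filterlim_ident)
    ultimately show "((\<lambda>t. (1/t) *\<^sub>R g (t *\<^sub>R \<eta>)) \<longlongrightarrow> a0) at_top"
      using Lim_transform_eventually by fastforce
  qed
  have tan: "tangent_at_infinity g \<eta> v = c"
    unfolding tangent_at_infinity_def
  proof (rule tendsto_Lim)
    show "\<not> trivial_limit (at_top :: real filter)" by simp
    show "((\<lambda>t. g (t *\<^sub>R \<eta> + v) - t *\<^sub>R recession g \<eta>) \<longlongrightarrow> c) at_top"
      apply (rule tendsto_eventually)
      using eventually_ge_at_top[of T] by eventually_elim (use h rec \<open>a = a0\<close> in auto)
  qed
  show ?thesis
    using eventually_ge_at_top[of T] by eventually_elim (use h rec tan \<open>a = a0\<close> in auto)
qed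

lemma lin_comb_mv: "(A *v ((1 - s) *\<^sub>R x + s *\<^sub>R y) + b) $ i
   = (1 - s) * (A *v x + b) $ i + s * (A *v y + b) $ i"
  by (simp add: matrix_vector_right_distrib matrix_vector_mult_scaleR algebra_simps)

lemma mv_delta: "(A *v (\<chi> k. if k = j then c else 0)) $ i = A$i$j * c"
  by (simp add: mv_nth if_distrib cong: if_cong)

lemma mv_cvec: "(A *v cvec c) $ i = c * (\<Sum>j\<in>UNIV. A$i$j)"
  by (simp add: mv_nth sum_distrib_left mult.commute)

lemma support:
  assumes x0: "x0 \<in> interior P" and aff: "\<forall>x\<in>P. g x = A *v x + b"
  shows "stochastic A" "\<forall>y. A *v y + b \<le> g y"
proof -
  obtain e where e: "e > 0" "ball x0 e \<subseteq> P" using x0 mem_interior by blast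
  have x0P: "x0 \<in> P" using e by auto
  show "\<forall>y. A *v y + b \<le> g y"
  proof (intro allI, unfold less_eq_vec_def, intro allI)
    fix y i
    define s where "s = e / (2 * (norm (y - x0) + e))"
    have ne: "norm (y - x0) + e > 0" using e by (simp add: add_nonneg_pos)
    have s: "s > 0" "s \<le> 1" using e ne by (auto simp: s_def pos_divide_le_eq)
    have q: "norm (y-x0) / (2*(norm(y-x0)+e)) < 1" using ne e by (simp add: pos_divide_less_eq)
    have "s * norm (y - x0) = e * (norm (y-x0) / (2*(norm(y-x0)+e)))" by (simp add: s_def)
    also have "\<dots> < e * 1" using q e by (intro mult_strict_left_mono) auto
    finally have "s * norm (y - x0) < e" by simp
    define z where "z = (1 - s) *\<^sub>R x0 + s *\<^sub>R y"
    have "z - x0 = s *\<^sub>R (y - x0)" by (simp add: z_def algebra_simps)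
    hence "norm (z - x0) = s * norm (y - x0)" using s by simp
    hence "dist x0 z < e" using \<open>s * norm (y - x0) < e\<close> by (simp add: dist_norm norm_minus_commute)
    hence zP: "z \<in> P" using e by auto
    have "g z $ i \<le> (1 - s) * g x0 $ i + s * g y $ i"
      using convex_onD[OF cvx[unfolded coord_convex_def, rule_format, of i], of s x0 y] s
      by (simp add: z_def)
    moreover have "g z $ i = (1 - s) * (A *v x0 + b) $ i + s * (A *v y + b) $ i"
    proof -
      have "g z $ i = (A *v z + b) $ i" using aff zP by simp
      thus ?thesis unfolding z_def using lin_comb_mv[of A s x0 y b i] by simp
    qed
    moreover have "g x0 $ i = (A *v x0 + b) $ i" using aff x0P by simp
    ultimately have "s * (A *v y + b) $ i \<le> s * g y $ i" by simp
    thus "(A *v y + b) $ i \<le> g y $ i" using s by simp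
  qed
  have nn: "A$i$j \<ge> 0" for i j
  proof -
    define d :: "real^'n" where "d = (\<chi> k. if k = j then e/2 else 0)"
    have "norm d \<le> (\<Sum>k\<in>UNIV. \<bar>d$k\<bar>)" by (rule norm_le_l1_cart)
    also have "\<dots> = e/2" using e by (simp add: d_def if_distrib cong: if_cong)
    finally have "dist x0 (x0 - d) < e" using e by (simp add: dist_norm)
    hence "x0 - d \<in> P" using e by auto
    moreover have "x0 - d \<le> x0" using e by (simp add: less_eq_vec_def d_def)
    ultimately have "(A *v (x0 - d) + b) $ i \<le> (A *v x0 + b) $ i"
      using mono[of "x0 - d" x0] aff x0P by (simp add: less_eq_vec_def)
    hence "A$i$j * (e/2) \<ge> 0" using mv_delta[of A j "e/2" i]
      by (simp add: matrix_vector_mult_diff_distrib d_def)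
    thus ?thesis using e by (simp add: zero_le_mult_iff)
  qed
  have rs: "(\<Sum>j\<in>UNIV. A$i$j) = 1" for i
  proof -
    define c where "c = e / (2 * real CARD('n))"
    have c: "c > 0" using e by (simp add: c_def)
    have "norm (cvec c :: real^'n) \<le> (\<Sum>k\<in>UNIV. \<bar>(cvec c :: real^'n)$k\<bar>)" by (rule norm_le_l1_cart)
    also have "\<dots> = e/2" using c e by (simp add: c_def)
    finally have "dist x0 (cvec c + x0) < e" using e by (simp add: dist_norm)
    hence "cvec c + x0 \<in> P" using e by auto
    hence "A *v (cvec c + x0) + b = cvec c + (A *v x0 + b)" using aff x0P hom[of c x0] by simp
    hence "(A *v cvec c) $ i = c" by (simp add: matrix_vector_right_distrib vec_eq_iff)
    thus ?thesis using c by (simp add: mv_cvec)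
  qed
  show "stochastic A" using nn rs by (simp add: stochastic_def)
qed

lemma interior_Union_empty:
  fixes \<A> :: "'a::topological_space set set"
  assumes "finite \<A>" "\<forall>A\<in>\<A>. closed A \<and> interior A = {}"
  shows "interior (\<Union>\<A>) = {}"
  using assms
proof (induction \<A> rule: finite_induct)
  case empty then show ?case by simp
next
  case (insert A F)
  then have "interior (A \<union> \<Union>F) = interior A" by (intro interior_closed_Un_empty_interior) auto
  with insert show ?case by simp
qed

lemma rep: "\<exists>R. finite R \<and> (\<forall>(A,b)\<in>R. stochastic A \<and> (\<forall>y. A *v y + b \<le> g y))
               \<and> (\<forall>x. \<exists>(A,b)\<in>R. g x = A *v x + b)"
proof -
  obtain \<P> where P: "finite \<P>" "\<forall>P\<in>\<P>. polyhedron P \<and> affine_on_set g P" "\<Union>\<P> = UNIV"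
    using pm unfolding polyhedral_map_def by blast
  have "\<forall>P\<in>\<P>. \<exists>A b. \<forall>x\<in>P. g x = A *v x + b" using P(2) unfolding affine_on_set_def by blast
  then obtain Af bf where AB: "\<forall>P\<in>\<P>. \<forall>x\<in>P. g x = Af P *v x + bf P" by metis
  define \<Q> where "\<Q> = {P\<in>\<P>. interior P \<noteq> {}}"
  define R where "R = (\<lambda>P. (Af P, bf P)) ` \<Q>"
  have fin: "finite R" using P(1) by (simp add: R_def \<Q>_def)
  have good: "stochastic (Af P) \<and> (\<forall>y. Af P *v y + bf P \<le> g y)" if PQ: "P \<in> \<Q>" for P
  proof -
    obtain x0 where "x0 \<in> interior P" using PQ unfolding \<Q>_def by blast
    moreover have "\<forall>x\<in>P. g x = Af P *v x + bf P" using AB PQ by (auto simp: \<Q>_def)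
    ultimately show ?thesis using support by blast
  qed
  define L where "L = \<Union>{P\<in>\<P>. interior P = {}}"
  have "interior L = {}" unfolding L_def
    using P polyhedron_imp_closed by (intro interior_Union_empty) auto
  hence cl: "closure (- L) = UNIV" by (simp add: closure_complement)
  define C where "C P = {x. g x = Af P *v x + bf P}" for P
  have "closed (C P)" for P unfolding C_def
    by (intro closed_Collect_eq cont continuous_intros)
  hence clU: "closed (\<Union>(C ` \<Q>))" using P(1) by (intro closed_Union) (auto simp: \<Q>_def)
  have "- L \<subseteq> \<Union>(C ` \<Q>)"
  proof
    fix x assume "x \<in> - L"
    obtain P where "P \<in> \<P>" "x \<in> P" using P(3) by blast
    moreover have "interior P \<noteq> {}" using \<open>x \<in> - L\<close> \<open>P \<in> \<P>\<close> \<open>x \<in> P\<close> by (auto simp: L_def)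
    ultimately show "x \<in> \<Union>(C ` \<Q>)" using AB by (auto simp: C_def \<Q>_def)
  qed
  hence "closure (- L) \<subseteq> \<Union>(C ` \<Q>)" using clU by (rule closure_minimal)
  hence cov: "\<forall>x. \<exists>P\<in>\<Q>. x \<in> C P" using cl by auto
  show ?thesis
  proof (intro exI[of _ R] conjI)
    show "finite R" by (rule fin)
    show "\<forall>(A,b)\<in>R. stochastic A \<and> (\<forall>y. A *v y + b \<le> g y)" using good by (auto simp: R_def)
    show "\<forall>x. \<exists>(A,b)\<in>R. g x = A *v x + b" using cov by (fastforce simp: R_def C_def)
  qed
qed

end


lemma poly_near:
  fixes p :: "real poly"
  assumes "e > 0"
  shows "\<exists>d>0. \<forall>x. \<bar>x - a\<bar> < d \<longrightarrow> \<bar>poly p x - poly p a\<bar> < e"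
  using poly_isCont[of a p] assms unfolding continuous_at_eps_delta dist_real_def by blast

lemma reduce:
  fixes s q :: "real poly"
  assumes "b0 < 1" "\<forall>\<beta>\<in>{b0..<1}. poly q \<beta> \<noteq> 0" "\<forall>\<beta>\<in>{b0..<1}. \<bar>poly s \<beta> / poly q \<beta>\<bar> \<le> K"
  shows "\<exists>S Q. poly Q 1 \<noteq> 0 \<and> (\<forall>\<beta>\<in>{b0..<1}. poly s \<beta> / poly q \<beta> = poly S \<beta> / poly Q \<beta>)"
  using assms
proof (induction "degree q" arbitrary: s q rule: less_induct)
  case less
  show ?case
  proof (cases "poly q 1 = 0")
    case False then show ?thesis by blast
  next
    case True
    have "[:-1,1:] dvd q" using True poly_eq_0_iff_dvd[of q 1] by simp
    then obtain q' where q: "q = [:-1,1:] * q'" by (rule dvdE)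
    have "q \<noteq> 0" using less(3) less(2) by fastforce
    then have "q' \<noteq> 0" using q by auto
    have "degree q = degree [:-1::real,1:] + degree q'" unfolding q using \<open>q' \<noteq> 0\<close> by (intro degree_mult_eq) auto
    hence deg: "degree q' < degree q" by simp
    have s1: "poly s 1 = 0"
    proof (rule ccontr)
      assume sn: "poly s 1 \<noteq> 0"
      define \<sigma> where "\<sigma> = poly s 1"
      define K' where "K' = \<bar>K\<bar> + 1"
      have K': "K' > 0" "K' > K" by (auto simp: K'_def)
      have sp: "\<bar>\<sigma>\<bar> > 0" using sn by (simp add: \<sigma>_def)
      obtain d1 where d1: "d1 > 0" "\<forall>x. \<bar>x - 1\<bar> < d1 \<longrightarrow> \<bar>poly q x - poly q 1\<bar> < \<bar>\<sigma>\<bar>/(2*K')"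
        using poly_near[where e="\<bar>\<sigma>\<bar>/(2*K')" and p=q and a=1] sp K' by auto
      obtain d2 where d2: "d2 > 0" "\<forall>x. \<bar>x - 1\<bar> < d2 \<longrightarrow> \<bar>poly s x - poly s 1\<bar> < \<bar>\<sigma>\<bar>/2"
        using poly_near[where e="\<bar>\<sigma>\<bar>/2" and p=s and a=1] sp by auto
      define \<beta> where "\<beta> = max b0 (1 - min d1 d2 / 2)"
      have \<beta>: "\<beta> \<in> {b0..<1}" "\<bar>\<beta> - 1\<bar> < d1" "\<bar>\<beta> - 1\<bar> < d2"
        using less(2) d1 d2 by (auto simp: \<beta>_def)
      have qb: "\<bar>poly q \<beta>\<bar> < \<bar>\<sigma>\<bar>/(2*K')" using d1 \<beta> True by auto
      have "\<bar>poly s \<beta> - poly s 1\<bar> < \<bar>\<sigma>\<bar>/2" using d2 \<beta> by blast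
      hence sb: "\<bar>poly s \<beta>\<bar> > \<bar>\<sigma>\<bar>/2" unfolding \<sigma>_def by arith
      have qn: "\<bar>poly q \<beta>\<bar> > 0" using less(3) \<beta> by auto
      have "K' * \<bar>poly q \<beta>\<bar> < K' * (\<bar>\<sigma>\<bar>/(2*K'))" using qb K' by (intro mult_strict_left_mono) auto
      also have "\<dots> = \<bar>\<sigma>\<bar>/2" using K' by simp
      finally have "K' * \<bar>poly q \<beta>\<bar> < \<bar>poly s \<beta>\<bar>" using sb by linarith
      hence "K' < \<bar>poly s \<beta>\<bar> / \<bar>poly q \<beta>\<bar>" using qn by (simp add: pos_less_divide_eq mult.commute)
      hence "K < \<bar>poly s \<beta> / poly q \<beta>\<bar>" using K' by (simp add: abs_divide)
      thus False using less(4) \<beta> by force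
    qed
    have "[:-1,1:] dvd s" using s1 poly_eq_0_iff_dvd[of s 1] by simp
    then obtain s' where s: "s = [:-1,1:] * s'" by (rule dvdE)
    have ratio: "\<forall>\<beta>\<in>{b0..<1}. poly s \<beta> / poly q \<beta> = poly s' \<beta> / poly q' \<beta>"
    proof
      fix \<beta> assume "\<beta> \<in> {b0..<1}"
      hence "\<beta> - 1 \<noteq> 0" by auto
      have e1: "poly s \<beta> = (\<beta> - 1) * poly s' \<beta>" unfolding s by (simp add: algebra_simps)
      have e2: "poly q \<beta> = (\<beta> - 1) * poly q' \<beta>" unfolding q by (simp add: algebra_simps)
      show "poly s \<beta> / poly q \<beta> = poly s' \<beta> / poly q' \<beta>" unfolding e1 e2
        by (rule mult_divide_mult_cancel_left) fact
    qed
    have q'n: "\<forall>\<beta>\<in>{b0..<1}. poly q' \<beta> \<noteq> 0" using less(3) q by auto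
    have b': "\<forall>\<beta>\<in>{b0..<1}. \<bar>poly s' \<beta> / poly q' \<beta>\<bar> \<le> K" using less(4) ratio by auto
    obtain S Q where "poly Q 1 \<noteq> 0" "\<forall>\<beta>\<in>{b0..<1}. poly s' \<beta> / poly q' \<beta> = poly S \<beta> / poly Q \<beta>"
      using less(1)[OF deg less(2) q'n b'] by blast
    thus ?thesis using ratio by auto
  qed
qed

lemma expand:
  fixes S Q :: "real poly"
  assumes Q1: "poly Q 1 \<noteq> 0"
  shows "\<exists>c1 \<delta> E. \<delta> > 0 \<and> (\<forall>\<beta>. \<bar>\<beta> - 1\<bar> < \<delta> \<longrightarrow> poly Q \<beta> \<noteq> 0 \<and>
            \<bar>poly S \<beta> / poly Q \<beta> - poly S 1 / poly Q 1 - c1*(\<beta>-1)\<bar> \<le> E*(\<beta>-1)^2)"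
proof -
  define R1 where "R1 = poly S 1 / poly Q 1"
  have "poly (S - smult R1 Q) 1 = 0" using Q1 by (simp add: R1_def)
  hence "[:-1,1:] dvd (S - smult R1 Q)" using poly_eq_0_iff_dvd[of "S - smult R1 Q" 1] by simp
  then obtain S1 where S1: "S - smult R1 Q = [:-1,1:] * S1" by (rule dvdE)
  define c1 where "c1 = poly S1 1 / poly Q 1"
  have "poly (S1 - smult c1 Q) 1 = 0" using Q1 by (simp add: c1_def)
  hence "[:-1,1:] dvd (S1 - smult c1 Q)" using poly_eq_0_iff_dvd[of "S1 - smult c1 Q" 1] by simp
  then obtain S2 where S2: "S1 - smult c1 Q = [:-1,1:] * S2" by (rule dvdE)
  have eq: "poly S \<beta> = R1 * poly Q \<beta> + (\<beta> - 1) * (c1 * poly Q \<beta> + (\<beta> - 1) * poly S2 \<beta>)" for \<beta>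
  proof -
    have "poly S \<beta> = R1 * poly Q \<beta> + (\<beta> - 1) * poly S1 \<beta>"
      using arg_cong[OF S1, of "\<lambda>p. poly p \<beta>"] by (simp add: algebra_simps)
    moreover have "poly S1 \<beta> = c1 * poly Q \<beta> + (\<beta> - 1) * poly S2 \<beta>"
      using arg_cong[OF S2, of "\<lambda>p. poly p \<beta>"] by (simp add: algebra_simps)
    ultimately show ?thesis by simp
  qed
  have qa: "\<bar>poly Q 1\<bar> > 0" using Q1 by simp
  obtain d1 where d1: "d1 > 0" "\<forall>x. \<bar>x - 1\<bar> < d1 \<longrightarrow> \<bar>poly Q x - poly Q 1\<bar> < \<bar>poly Q 1\<bar>/2"
    using poly_near[where e="\<bar>poly Q 1\<bar>/2" and p=Q and a=1] qa by auto
  obtain d2 where d2: "d2 > 0" "\<forall>x. \<bar>x - 1\<bar> < d2 \<longrightarrow> \<bar>poly S2 x - poly S2 1\<bar> < 1"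
    using poly_near[where e=1 and p=S2 and a=1] by auto
  define E where "E = (\<bar>poly S2 1\<bar> + 1) / (\<bar>poly Q 1\<bar>/2)"
  have main: "\<forall>\<beta>. \<bar>\<beta> - 1\<bar> < min d1 d2 \<longrightarrow> poly Q \<beta> \<noteq> 0 \<and>
            \<bar>poly S \<beta> / poly Q \<beta> - poly S 1 / poly Q 1 - c1*(\<beta>-1)\<bar> \<le> E*(\<beta>-1)^2"
  proof (intro allI impI conjI)
    fix \<beta> :: real assume b: "\<bar>\<beta> - 1\<bar> < min d1 d2"
    have "\<bar>poly Q \<beta> - poly Q 1\<bar> < \<bar>poly Q 1\<bar>/2" using d1 b by auto
    hence Qb: "\<bar>poly Q \<beta>\<bar> > \<bar>poly Q 1\<bar>/2" by arith
    hence Qn: "poly Q \<beta> \<noteq> 0" using qa by auto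
    have S2b: "\<bar>poly S2 \<beta>\<bar> \<le> \<bar>poly S2 1\<bar> + 1" using d2 b by force
    define w where "w = poly S2 \<beta> / poly Q \<beta>"
    have eq1: "poly S \<beta> / poly Q \<beta> - R1 - c1*(\<beta>-1) = (\<beta>-1)^2 * w"
      using Qn unfolding eq w_def by (simp add: field_simps power2_eq_square)
    have wE: "\<bar>w\<bar> \<le> E"
    proof -
      have "\<bar>poly S2 \<beta> / poly Q \<beta>\<bar> = \<bar>poly S2 \<beta>\<bar> / \<bar>poly Q \<beta>\<bar>" by (simp add: abs_divide)
      also have "\<dots> \<le> (\<bar>poly S2 1\<bar> + 1) / \<bar>poly Q \<beta>\<bar>" using S2b by (simp add: divide_right_mono)
      also have "\<dots> \<le> E" unfolding E_def using Qb qa by (intro divide_left_mono) auto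
      finally show ?thesis unfolding w_def .
    qed
    have "\<bar>poly S \<beta> / poly Q \<beta> - R1 - c1*(\<beta>-1)\<bar> = \<bar>(\<beta>-1)^2\<bar> * \<bar>w\<bar>" by (simp only: eq1 abs_mult)
    also have "\<dots> = (\<beta>-1)^2 * \<bar>w\<bar>" by simp
    also have "\<dots> \<le> (\<beta>-1)^2 * E" using wE by (intro mult_left_mono) auto
    finally have "\<bar>poly S \<beta> / poly Q \<beta> - poly S 1 / poly Q 1 - c1*(\<beta>-1)\<bar> \<le> E*(\<beta>-1)^2"
      unfolding R1_def[symmetric] by (simp add: mult.commute)
    thus "\<bar>poly S \<beta> / poly Q \<beta> - poly S 1 / poly Q 1 - c1*(\<beta>-1)\<bar> \<le> E*(\<beta>-1)^2" .
    show "poly Q \<beta> \<noteq> 0" by (rule Qn)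
  qed
  have "min d1 d2 > 0" using d1 d2 by simp
  with main show ?thesis by blast
qed

lemma laurent:
  fixes p q :: "real poly"
  assumes b0: "b0 < 1" and qn: "\<forall>\<beta>\<in>{b0..<1}. poly q \<beta> \<noteq> 0"
    and bd: "\<forall>\<beta>\<in>{b0..<1}. (1 - \<beta>) * \<bar>poly p \<beta> / poly q \<beta>\<bar> \<le> K"
  shows "\<exists>c h \<delta> E. \<delta> > 0 \<and> E \<ge> 0 \<and> (\<forall>\<beta>. 1 - \<delta> < \<beta> \<and> \<beta> < 1 \<longrightarrow>
            \<bar>poly p \<beta> / poly q \<beta> - c/(1-\<beta>) - h\<bar> \<le> E*(1-\<beta>))"
proof -
  define s where "s = [:1,-1:] * p"
  have ps: "poly s \<beta> = (1 - \<beta>) * poly p \<beta>" for \<beta> by (simp add: s_def algebra_simps)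
  have "\<forall>\<beta>\<in>{b0..<1}. \<bar>poly s \<beta> / poly q \<beta>\<bar> \<le> K"
  proof
    fix \<beta> assume "\<beta> \<in> {b0..<1}"
    hence "1 - \<beta> \<ge> 0" by auto
    have "poly s \<beta> / poly q \<beta> = (1 - \<beta>) * (poly p \<beta> / poly q \<beta>)" by (simp add: ps)
    hence "\<bar>poly s \<beta> / poly q \<beta>\<bar> = \<bar>1 - \<beta>\<bar> * \<bar>poly p \<beta> / poly q \<beta>\<bar>"
      by (simp only: abs_mult)
    hence "\<bar>poly s \<beta> / poly q \<beta>\<bar> = (1 - \<beta>) * \<bar>poly p \<beta> / poly q \<beta>\<bar>"
      using \<open>1 - \<beta> \<ge> 0\<close> by simp
    thus "\<bar>poly s \<beta> / poly q \<beta>\<bar> \<le> K" using bd \<open>\<beta> \<in> {b0..<1}\<close> by metis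
  qed
  from reduce[OF b0 qn this] obtain S Q where SQ: "poly Q 1 \<noteq> 0"
    "\<forall>\<beta>\<in>{b0..<1}. poly s \<beta> / poly q \<beta> = poly S \<beta> / poly Q \<beta>" by blast
  from expand[OF SQ(1), of S] obtain c1 \<delta> E where ex: "\<delta> > 0" "\<forall>\<beta>. \<bar>\<beta> - 1\<bar> < \<delta> \<longrightarrow> poly Q \<beta> \<noteq> 0 \<and>
            \<bar>poly S \<beta> / poly Q \<beta> - poly S 1 / poly Q 1 - c1*(\<beta>-1)\<bar> \<le> E*(\<beta>-1)^2" by blast
  define R1 where "R1 = poly S 1 / poly Q 1"
  have main: "\<forall>\<beta>. 1 - min \<delta> (1 - b0) < \<beta> \<and> \<beta> < 1 \<longrightarrow>
            \<bar>poly p \<beta> / poly q \<beta> - R1/(1-\<beta>) - (-c1)\<bar> \<le> \<bar>E\<bar>*(1-\<beta>)"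
  proof (intro allI impI)
    fix \<beta> :: real assume b: "1 - min \<delta> (1 - b0) < \<beta> \<and> \<beta> < 1"
    hence bb: "\<beta> \<in> {b0..<1}" "\<bar>\<beta> - 1\<bar> < \<delta>" by auto
    have om: "1 - \<beta> > 0" using b by simp
    have sq: "poly s \<beta> / poly q \<beta> = (1-\<beta>) * (poly p \<beta> / poly q \<beta>)" by (simp add: ps)
    have "poly p \<beta> / poly q \<beta> = ((1-\<beta>) * (poly p \<beta> / poly q \<beta>))/(1-\<beta>)" using om by simp
    also have "\<dots> = (poly S \<beta> / poly Q \<beta>) / (1 - \<beta>)" using SQ(2) bb sq by simp
    finally have r: "poly p \<beta> / poly q \<beta> = (poly S \<beta> / poly Q \<beta>) / (1 - \<beta>)" .
    define z where "z = poly S \<beta> / poly Q \<beta>"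
    define err where "err = z - R1 + c1*(1-\<beta>)"
    have "err = z - R1 - c1*(\<beta>-1)" by (simp add: err_def algebra_simps)
    hence err: "\<bar>err\<bar> \<le> E*(\<beta>-1)^2" using ex(2) bb by (simp add: R1_def z_def)
    have "z/(1-\<beta>) - R1/(1-\<beta>) - (-c1) = err / (1 - \<beta>)"
      unfolding err_def using om by (simp add: diff_divide_distrib add_divide_distrib)
    hence "poly p \<beta> / poly q \<beta> - R1/(1-\<beta>) - (-c1) = err / (1 - \<beta>)" unfolding r z_def .
    moreover have "\<bar>err / (1 - \<beta>)\<bar> \<le> \<bar>E\<bar>*(1-\<beta>)"
    proof -
      have "\<bar>err\<bar> \<le> \<bar>E\<bar>*(1-\<beta>)^2" using err by (metis abs_ge_self mult_right_mono order_trans power2_commute zero_le_power2)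
      hence "\<bar>err\<bar> / (1-\<beta>) \<le> \<bar>E\<bar>*(1-\<beta>)^2 / (1-\<beta>)" using om by (simp add: divide_right_mono)
      thus ?thesis using om by (simp add: abs_divide power2_eq_square)
    qed
    ultimately show "\<bar>poly p \<beta> / poly q \<beta> - R1/(1-\<beta>) - (-c1)\<bar> \<le> \<bar>E\<bar>*(1-\<beta>)" by simp
  qed
  have "min \<delta> (1 - b0) > 0" using ex b0 by simp
  with main show ?thesis by (intro exI[of _ R1] exI[of _ "-c1"] exI[of _ "min \<delta> (1 - b0)"] exI[of _ "\<bar>E\<bar>"]) auto
qed



definition Dm :: "real^'n^'n \<Rightarrow> real \<Rightarrow> real^'n^'n" where
  "Dm A \<beta> = (\<chi> i j. (if i = j then 1 else 0) - \<beta> * A$i$j)"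

definition Nm :: "real^'n^'n \<Rightarrow> real^'n \<Rightarrow> real \<Rightarrow> 'n \<Rightarrow> real^'n^'n" where
  "Nm A b \<beta> k = (\<chi> i j. if j = k then b$i else Dm A \<beta> $i$j)"

lemma Dm_mv:
  fixes A :: "real^'n^'n"
  shows "Dm A \<beta> *v x = x - \<beta> *\<^sub>R (A *v x)"
proof -
  have "(Dm A \<beta> *v x) $ i = x $ i - \<beta> * (A *v x) $ i" for i :: 'n
  proof -
    have d: "(if i = j then 1 else 0) * x$j = (if i = j then x$j else 0)" for j :: 'n by simp
    have "(Dm A \<beta> *v x) $ i = (\<Sum>j\<in>UNIV. (if i = j then 1 else 0) * x$j - \<beta> * (A$i$j * x$j))"
      by (simp add: mv_nth Dm_def left_diff_distrib mult.assoc)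
    also have "\<dots> = (\<Sum>j\<in>UNIV. (if i = j then x$j else 0) - \<beta> * (A$i$j * x$j))"
      by (simp only: d)
    also have "\<dots> = x $ i - \<beta> * (A *v x) $ i"
      by (simp add: sum_subtractf mv_nth sum_distrib_left)
    finally show ?thesis .
  qed
  thus ?thesis by (simp add: vec_eq_iff)
qed

lemma det_poly:
  fixes M :: "real \<Rightarrow> real^'n^'n"
  assumes "\<forall>\<beta> i j. M \<beta> $ i $ j = a i j + \<beta> * c i j"
  shows "\<exists>p. \<forall>\<beta>. det (M \<beta>) = poly p \<beta>"
proof -
  define p where "p = (\<Sum>\<pi>\<in>{\<pi>. \<pi> permutes (UNIV::'n set)}.
      smult (of_int (sign \<pi>)) (\<Prod>i\<in>UNIV. [:a i (\<pi> i), c i (\<pi> i):]))"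
  have "det (M \<beta>) = poly p \<beta>" for \<beta>
    unfolding det_def p_def by (simp add: poly_sum poly_prod assms)
  thus ?thesis by blast
qed

lemma Dm_poly: "\<exists>p. \<forall>\<beta>. det (Dm A \<beta>) = poly p \<beta>"
  by (rule det_poly[where a="\<lambda>i j. if i = j then 1 else 0" and c="\<lambda>i j. - A$i$j"]) (simp add: Dm_def)

lemma Nm_poly: "\<exists>p. \<forall>\<beta>. det (Nm A b \<beta> k) = poly p \<beta>"
  by (rule det_poly[where a="\<lambda>i j. if j = k then b$i else if i = j then 1 else 0"
        and c="\<lambda>i j. if j = k then 0 else - A$i$j"]) (simp add: Nm_def Dm_def)

lemma maxabs: "\<exists>m. (\<forall>j. \<bar>(z::real^'n)$j\<bar> \<le> m) \<and> (\<exists>j. \<bar>z$j\<bar> = m)"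
proof -
  define m where "m = Max (range (\<lambda>j. \<bar>z$j\<bar>))"
  have "\<forall>j. \<bar>z$j\<bar> \<le> m" by (simp add: m_def)
  moreover have "m \<in> range (\<lambda>j. \<bar>z$j\<bar>)" unfolding m_def by (rule Max_in) auto
  ultimately show ?thesis by auto
qed

lemma stoch_bound:
  assumes "stochastic A" "\<forall>j. \<bar>z$j\<bar> \<le> m"
  shows "\<bar>(A *v z)$i\<bar> \<le> m"
proof -
  have "\<bar>(A *v z)$i\<bar> \<le> (\<Sum>j\<in>UNIV. \<bar>A$i$j * z$j\<bar>)" unfolding mv_nth by (rule sum_abs)
  also have "\<dots> \<le> (\<Sum>j\<in>UNIV. A$i$j * m)"
    using assms by (intro sum_mono) (simp add: abs_mult stochastic_def mult_left_mono)
  also have "\<dots> = m" using assms(1) by (simp add: stochastic_def sum_distrib_right[symmetric])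
  finally show ?thesis .
qed

lemma Dm_bound:
  assumes "stochastic A" "0 \<le> \<beta>" "\<beta> < 1" "Dm A \<beta> *v x = b" "\<forall>j. \<bar>b$j\<bar> \<le> B"
  shows "(1 - \<beta>) * \<bar>x$k\<bar> \<le> B"
proof -
  obtain m where m: "\<forall>j. \<bar>x$j\<bar> \<le> m" "\<exists>j. \<bar>x$j\<bar> = m" using maxabs by blast
  obtain j where j: "\<bar>x$j\<bar> = m" using m by blast
  have x: "x = b + \<beta> *\<^sub>R (A *v x)" using assms(4) by (simp add: Dm_mv algebra_simps)
  have "\<bar>(A *v x)$j\<bar> \<le> m" by (rule stoch_bound[OF assms(1) m(1)])
  hence "\<bar>\<beta> * (A *v x)$j\<bar> \<le> \<beta> * m" using assms(2) by (simp add: abs_mult mult_left_mono)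
  moreover have "x$j = b$j + \<beta> * (A *v x)$j" using arg_cong[OF x, of "\<lambda>v. v$j"] by simp
  ultimately have "m \<le> B + \<beta> * m" using j assms(5) by (metis abs_triangle_ineq add_mono order_trans)
  hence "(1 - \<beta>) * m \<le> B" by (simp add: algebra_simps)
  moreover have "(1 - \<beta>) * \<bar>x$k\<bar> \<le> (1 - \<beta>) * m" using m(1) assms(3) by (intro mult_left_mono) auto
  ultimately show ?thesis by simp
qed

lemma Dm_det:
  assumes "stochastic A" "0 \<le> \<beta>" "\<beta> < 1"
  shows "det (Dm A \<beta>) \<noteq> 0"
proof -
  have z0: "z = 0" if "Dm A \<beta> *v z = 0" for z
  proof -
    have "(1 - \<beta>) * \<bar>z$k\<bar> \<le> 0" for k using Dm_bound[OF assms that, of 0] by simp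
    hence "\<bar>z$k\<bar> \<le> 0" for k using assms(3) by (simp add: mult_le_0_iff)
    thus ?thesis by (simp add: vec_eq_iff)
  qed
  have "inj ((*v) (Dm A \<beta>))"
  proof (rule injI)
    fix x y assume "Dm A \<beta> *v x = Dm A \<beta> *v y"
    hence "Dm A \<beta> *v (x - y) = 0" by (simp add: matrix_vector_mult_diff_distrib)
    hence "x - y = 0" by (rule z0)
    thus "x = y" by simp
  qed
  thus ?thesis using det_nz_iff_inj[of "(*v) (Dm A \<beta>)"] by simp
qed

lemma Dm_solve:
  assumes "det (Dm A \<beta>) \<noteq> 0"
  shows "Dm A \<beta> *v x = b \<longleftrightarrow> x = (\<chi> k. det (Nm A b \<beta> k) / det (Dm A \<beta>))"
  using cramer[OF assms, of x b] by (simp add: Nm_def)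



lemma pigeon:
  fixes R :: "'a set" and P :: "'a \<Rightarrow> real \<Rightarrow> bool"
  assumes "finite R" "\<forall>t\<ge>T0. \<exists>Q\<in>R. P Q t"
  shows "\<exists>Q\<in>R. \<forall>T. \<exists>t\<ge>T. P Q t"
proof (rule ccontr)
  assume "\<not> ?thesis"
  then have "\<forall>Q\<in>R. \<exists>T. \<forall>t\<ge>T. \<not> P Q t" by (meson)
  then obtain Tf where Tf: "\<forall>Q\<in>R. \<forall>t\<ge>Tf Q. \<not> P Q t" by metis
  define T where "T = Max (insert T0 (Tf ` R))"
  have "T \<ge> T0" "\<forall>Q\<in>R. Tf Q \<le> T" using assms(1) by (auto simp: T_def)
  then obtain Q where "Q \<in> R" "P Q T" using assms(2) by blast
  thus False using Tf \<open>\<forall>Q\<in>R. Tf Q \<le> T\<close> by blast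
qed

lemma sol_exp:
  fixes A :: "real^'n^'n"
  assumes st: "stochastic A"
  shows "\<exists>c h \<delta> E. \<delta> > 0 \<and> E \<ge> 0 \<and> (\<forall>\<beta> x. 1 - \<delta> < \<beta> \<and> \<beta> < 1 \<and> Dm A \<beta> *v x = b \<longrightarrow>
            (\<forall>k. \<bar>x$k - c$k/(1-\<beta>) - h$k\<bar> \<le> E*(1-\<beta>)))"
proof -
  obtain B where B: "\<forall>j. \<bar>b$j\<bar> \<le> B" using maxabs by blast
  obtain q where q: "\<forall>\<beta>. det (Dm A \<beta>) = poly q \<beta>" using Dm_poly by blast
  have "\<exists>r::real\<times>real\<times>real\<times>real. fst (snd (snd r)) > 0 \<and> snd (snd (snd r)) \<ge> 0 \<and>
     (\<forall>\<beta>. 1 - fst (snd (snd r)) < \<beta> \<and> \<beta> < 1 \<longrightarrow>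
        \<bar>det (Nm A b \<beta> k) / det (Dm A \<beta>) - fst r/(1-\<beta>) - fst (snd r)\<bar> \<le> snd (snd (snd r))*(1-\<beta>))" for k
  proof -
    obtain p where p: "\<forall>\<beta>. det (Nm A b \<beta> k) = poly p \<beta>" using Nm_poly by blast
    have qn: "\<forall>\<beta>\<in>{0..<1}. poly q \<beta> \<noteq> 0" using Dm_det[OF st] q by auto
    have bd: "\<forall>\<beta>\<in>{0..<1}. (1 - \<beta>) * \<bar>poly p \<beta> / poly q \<beta>\<bar> \<le> B"
    proof
      fix \<beta> :: real assume b: "\<beta> \<in> {0..<1}"
      define x where "x = (\<chi> k. det (Nm A b \<beta> k) / det (Dm A \<beta>))"
      have d: "det (Dm A \<beta>) \<noteq> 0" using Dm_det[OF st] b by auto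
      have "Dm A \<beta> *v x = b" using Dm_solve[OF d] by (simp add: x_def)
      from Dm_bound[OF st _ _ this B, of k] b have "(1 - \<beta>) * \<bar>x$k\<bar> \<le> B" by auto
      thus "(1 - \<beta>) * \<bar>poly p \<beta> / poly q \<beta>\<bar> \<le> B" by (simp add: x_def p q)
    qed
    from laurent[of 0 q p B] qn bd obtain c h \<delta> E where
      l: "\<delta> > 0" "E \<ge> 0" "\<forall>\<beta>. 1 - \<delta> < \<beta> \<and> \<beta> < 1 \<longrightarrow> \<bar>poly p \<beta> / poly q \<beta> - c/(1-\<beta>) - h\<bar> \<le> E*(1-\<beta>)"
      by auto
    show ?thesis using l by (intro exI[of _ "(c, h, \<delta>, E)"]) (simp add: p q)
  qed
  then obtain rf where rf: "\<forall>k. fst (snd (snd (rf k))) > 0 \<and> snd (snd (snd (rf k))) \<ge> 0 \<and>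
     (\<forall>\<beta>. 1 - fst (snd (snd (rf k))) < \<beta> \<and> \<beta> < 1 \<longrightarrow>
        \<bar>det (Nm A b \<beta> k) / det (Dm A \<beta>) - fst (rf k)/(1-\<beta>) - fst (snd (rf k))\<bar> \<le> snd (snd (snd (rf k)))*(1-\<beta>))"
    by metis
  define c where "c = (\<chi> k. fst (rf k))"
  define h where "h = (\<chi> k. fst (snd (rf k)))"
  define \<delta> where "\<delta> = min 1 (Min (range (\<lambda>k. fst (snd (snd (rf k))))))"
  define E where "E = Max (range (\<lambda>k. snd (snd (snd (rf k)))))"
  have mle: "Min (range (\<lambda>k. fst (snd (snd (rf k))))) \<le> fst (snd (snd (rf k)))" for k
    by (rule Min_le) auto
  have \<delta>: "\<delta> > 0" "\<forall>k. \<delta> \<le> fst (snd (snd (rf k)))" "\<delta> \<le> 1"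
    using rf mle by (auto simp: \<delta>_def min_le_iff_disj)
  have E: "E \<ge> 0" "\<forall>k. snd (snd (snd (rf k))) \<le> E"
  proof -
    show "\<forall>k. snd (snd (snd (rf k))) \<le> E" by (simp add: E_def)
    then show "E \<ge> 0" using rf by (meson order_trans)
  qed
  show ?thesis
  proof (rule exI[of _ c], rule exI[of _ h], rule exI[of _ \<delta>], rule exI[of _ E], intro conjI allI impI)
    show "\<delta> > 0" "E \<ge> 0" using \<delta> E by auto
    fix \<beta> x k assume a: "1 - \<delta> < \<beta> \<and> \<beta> < 1 \<and> Dm A \<beta> *v x = b"
    have b0: "0 \<le> \<beta>" using a \<delta> by auto
    have d: "det (Dm A \<beta>) \<noteq> 0" using Dm_det[OF st b0] a by auto
    have xk: "x$k = det (Nm A b \<beta> k) / det (Dm A \<beta>)" using Dm_solve[OF d, of x b] a by simp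
    have "1 - fst (snd (snd (rf k))) < \<beta>" using a \<delta>(2)[rule_format, of k] by linarith
    hence "\<bar>x$k - c$k/(1-\<beta>) - h$k\<bar> \<le> snd (snd (snd (rf k)))*(1-\<beta>)"
      using rf a xk by (simp add: c_def h_def)
    also have "\<dots> \<le> E*(1-\<beta>)" using E a by (intro mult_right_mono) auto
    finally show "\<bar>x$k - c$k/(1-\<beta>) - h$k\<bar> \<le> E*(1-\<beta>)" .
  qed
qed

context opah
begin

lemma disc_fix:
  assumes "0 \<le> \<beta>" "\<beta> < 1"
  shows "\<exists>x. g (\<beta> *\<^sub>R x) = x"
proof -
  obtain B where B: "\<forall>j. \<bar>g 0 $ j\<bar> \<le> B" using maxabs by blast
  have B0: "B \<ge> 0" using B by (meson abs_ge_zero order_trans)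
  define M where "M = B / (1 - \<beta>)"
  have M0: "M \<ge> 0" using B0 assms by (simp add: M_def)
  have BM: "B + \<beta> * M = M" using assms by (simp add: M_def field_simps)
  define F where "F x = g (\<beta> *\<^sub>R x)" for x
  have Fc: "F (cvec c) = cvec (\<beta> * c) + g 0" for c
  proof -
    have "\<beta> *\<^sub>R cvec c = cvec (\<beta> * c) + (0::real^'n)" by (simp add: vec_eq_iff)
    thus ?thesis unfolding F_def using hom by metis
  qed
  have Fm: "x \<le> y \<Longrightarrow> F x \<le> F y" for x y
    unfolding F_def using assms(1) by (intro mono) (simp add: less_eq_vec_def mult_left_mono)
  define s where "s k = (F ^^ k) (cvec (-M))" for k
  have s_inc: "s k \<le> s (Suc k)" for k
  proof (induction k)
    case 0
    have "g 0 $ i \<ge> -B" for i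
    proof -
      have "\<bar>g 0 $ i\<bar> \<le> B" using B by blast
      thus ?thesis by arith
    qed
    hence "cvec (-M) \<le> F (cvec (-M))"
    proof (unfold Fc less_eq_vec_def, intro allI)
      fix i
      have "-B \<le> g 0 $ i" by fact
      thus "cvec (-M) $ i \<le> (cvec (\<beta> * -M) + g 0) $ i" using BM by simp
    qed
    thus ?case by (simp add: s_def)
  next
    case (Suc k) thus ?case by (simp add: s_def Fm)
  qed
  have s_bd: "s k \<le> cvec M" for k
  proof (induction k)
    case 0 thus ?case using M0 by (simp add: s_def less_eq_vec_def)
  next
    case (Suc k)
    have "g 0 $ i \<le> B" for i
    proof -
      have "\<bar>g 0 $ i\<bar> \<le> B" using B by blast
      thus ?thesis by arith
    qed
    hence "F (cvec M) \<le> cvec M"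
    proof (unfold Fc less_eq_vec_def, intro allI)
      fix i
      have "g 0 $ i \<le> B" by fact
      thus "(cvec (\<beta> * M) + g 0) $ i \<le> cvec M $ i" using BM by simp
    qed
    hence "F (s k) \<le> cvec M" using Fm[OF Suc] order_trans by blast
    thus ?case by (simp add: s_def)
  qed
  define L where "L = (\<chi> i. SUP k. s k $ i)"
  have "(\<lambda>k. s k $ i) \<longlonglongrightarrow> L $ i" for i
  proof -
    have "incseq (\<lambda>k. s k $ i)" using s_inc by (intro incseq_SucI) (simp add: less_eq_vec_def)
    moreover have "bdd_above (range (\<lambda>k. s k $ i))" using s_bd
      by (intro bdd_aboveI[of _ M]) (auto simp: less_eq_vec_def)
    ultimately show ?thesis unfolding L_def using LIMSEQ_incseq_SUP by simp
  qed
  hence sL: "s \<longlonglongrightarrow> L" by (intro vec_tendstoI)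
  have "continuous_on UNIV F" unfolding F_def by (intro continuous_on_compose2[OF cont[of UNIV]] continuous_intros) auto
  hence "isCont F L" by (simp add: continuous_on_eq_continuous_at)
  hence "(\<lambda>k. F (s k)) \<longlonglongrightarrow> F L" using sL by (rule isCont_tendsto_compose)
  moreover have "(\<lambda>k. F (s k)) \<longlonglongrightarrow> L" using LIMSEQ_Suc[OF sL] by (simp add: s_def)
  ultimately have "F L = L" using LIMSEQ_unique by blast
  thus ?thesis unfolding F_def by blast
qed

end


context opah
begin

lemma inv_exists: "\<exists>\<eta> h T. \<forall>t\<ge>T. g (t *\<^sub>R \<eta> + h) = (t+1) *\<^sub>R \<eta> + h"
proof -
  obtain R where R: "finite R" "\<forall>(A,b)\<in>R. stochastic A \<and> (\<forall>y. A *v y + b \<le> g y)"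
      "\<forall>x. \<exists>(A,b)\<in>R. g x = A *v x + b" using rep by blast
  define P where "P Q t \<longleftrightarrow> (\<exists>x. g ((t/(t+1)) *\<^sub>R x) = x \<and> Dm (fst Q) (t/(t+1)) *v x = snd Q)" for Q t
  have "\<forall>t\<ge>0. \<exists>Q\<in>R. P Q t"
  proof (intro allI impI)
    fix t :: real assume t0: "t \<ge> 0"
    define \<beta> where "\<beta> = t/(t+1)"
    have "0 \<le> \<beta>" "\<beta> < 1" using t0 by (auto simp: \<beta>_def)
    then obtain x where x: "g (\<beta> *\<^sub>R x) = x" using disc_fix by blast
    obtain A b where Ab: "(A,b) \<in> R" "g (\<beta> *\<^sub>R x) = A *v (\<beta> *\<^sub>R x) + b" using R(3) by blast
    have "Dm A \<beta> *v x = b" using Ab(2) x by (simp add: Dm_mv matrix_vector_mult_scaleR algebra_simps)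
    thus "\<exists>Q\<in>R. P Q t" using Ab(1) x unfolding P_def \<beta>_def by (intro bexI[of _ "(A,b)"]) auto
  qed
  from pigeon[OF R(1) this] obtain Q where Q: "Q \<in> R" "\<forall>T. \<exists>t\<ge>T. P Q t" by blast
  obtain A b where Qab: "Q = (A,b)" by (cases Q)
  have st: "stochastic A" using R(2) Q(1) Qab by auto
  obtain \<eta> h \<delta> E where ex: "\<delta> > 0" "E \<ge> 0"
    "\<forall>\<beta> x. 1 - \<delta> < \<beta> \<and> \<beta> < 1 \<and> Dm A \<beta> *v x = b \<longrightarrow> (\<forall>k. \<bar>x$k - \<eta>$k/(1-\<beta>) - h$k\<bar> \<le> E*(1-\<beta>))"
    using sol_exp[OF st, of b] by blast
  obtain H where H: "\<forall>j. \<bar>h$j\<bar> \<le> H" using maxabs by blast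
  have H0: "H \<ge> 0" using H by (meson abs_ge_zero order_trans)
  obtain a c T0 where hl: "\<forall>t\<ge>T0. g (t *\<^sub>R \<eta> + h) = t *\<^sub>R a + c" using halfline_lin by blast
  define K where "K = 2*E + H"
  have K0: "K \<ge> 0" using ex H0 by (simp add: K_def)
  have key: "\<bar>t*(a$i - \<eta>$i) + (c$i - \<eta>$i - h$i)\<bar> \<le> \<epsilon>" 
    if \<epsilon>: "\<epsilon> > 0" and tT: "t \<ge> max T0 (max (1/\<delta>) (K/\<epsilon>))" and Pt: "P Q t" for \<epsilon> t i
  proof -
    have "1/\<delta> > 0" using ex by simp
    hence t0: "t > 0" using tT by linarith
    define \<beta> where "\<beta> = t/(t+1)"
    obtain x where x: "g (\<beta> *\<^sub>R x) = x" "Dm A \<beta> *v x = b" using Pt by (auto simp: P_def Qab \<beta>_def)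
    have omb: "1 - \<beta> = 1/(t+1)" using t0 by (simp add: \<beta>_def field_simps)
    have bt: "\<beta>*(t+1) = t" using t0 by (simp add: \<beta>_def)
    have b01: "0 \<le> \<beta>" "\<beta> \<le> 1" "\<beta> < 1" using t0 by (auto simp: \<beta>_def)
    have "t \<ge> 1/\<delta>" using tT by simp
    hence "t * \<delta> \<ge> 1" using ex by (simp add: field_simps)
    hence "1 < (t+1)*\<delta>" using ex by (simp add: algebra_simps)
    hence "1/(t+1) < \<delta>" using t0 by (simp add: field_simps)
    hence bd: "1 - \<delta> < \<beta>" using omb by simp
    have e: "\<bar>x$k - (t+1)*\<eta>$k - h$k\<bar> \<le> E/(t+1)" for k
    proof -
      have "\<bar>x$k - \<eta>$k/(1-\<beta>) - h$k\<bar> \<le> E*(1-\<beta>)" using ex(3) bd b01 x(2) by blast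
      moreover have "\<eta>$k/(1-\<beta>) = (t+1)*\<eta>$k" using omb t0 by simp
      ultimately show ?thesis using omb by (simp add: mult.commute)
    qed
    have near: "\<bar>(t *\<^sub>R \<eta> + h)$j - (\<beta> *\<^sub>R x)$j\<bar> \<le> (E + H)/(t+1)" for j
    proof -
      define ej where "ej = x$j - (t+1)*\<eta>$j - h$j"
      have "(t *\<^sub>R \<eta> + h)$j - (\<beta> *\<^sub>R x)$j = t*\<eta>$j + h$j - \<beta> * ((t+1)*\<eta>$j + h$j + ej)"
        by (simp add: ej_def)
      also have "\<dots> = t*\<eta>$j + h$j - (\<beta>*((t+1)*\<eta>$j) + \<beta>*h$j + \<beta>*ej)" by (simp add: distrib_left)
      also have "\<beta>*((t+1)*\<eta>$j) = t*\<eta>$j" using bt by (metis mult.assoc)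
      also have "t*\<eta>$j + h$j - (t*\<eta>$j + \<beta>*h$j + \<beta>*ej) = (1-\<beta>)*h$j - \<beta>*ej" by (simp add: algebra_simps)
      also have "\<dots> = h$j/(t+1) - \<beta>*ej" using omb by simp
      finally have eq: "(t *\<^sub>R \<eta> + h)$j - (\<beta> *\<^sub>R x)$j = h$j/(t+1) - \<beta>*ej" .
      have "\<bar>h$j/(t+1)\<bar> \<le> H/(t+1)" using H t0 by (simp add: abs_divide divide_right_mono)
      moreover have "\<bar>\<beta>*ej\<bar> \<le> E/(t+1)"
      proof -
        have "\<bar>\<beta>*ej\<bar> = \<beta>*\<bar>ej\<bar>" using b01 by (simp add: abs_mult)
        also have "\<dots> \<le> 1*\<bar>ej\<bar>" using b01 by (intro mult_right_mono) auto
        also have "\<dots> \<le> E/(t+1)" using e[of j] by (simp add: ej_def)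
        finally show ?thesis .
      qed
      ultimately have "\<bar>h$j/(t+1) - \<beta>*ej\<bar> \<le> H/(t+1) + E/(t+1)" by arith
      thus ?thesis unfolding eq by (simp add: add_divide_distrib)
    qed
    have gclose: "\<bar>g (t *\<^sub>R \<eta> + h) $ i - x $ i\<bar> \<le> (E + H)/(t+1)"
      using ne[of "t *\<^sub>R \<eta> + h" "\<beta> *\<^sub>R x" "(E + H)/(t+1)" i] near x(1) by auto
    have "\<bar>g (t *\<^sub>R \<eta> + h) $ i - (t+1)*\<eta>$i - h$i\<bar> \<le> (E + H)/(t+1) + E/(t+1)"
      using gclose e[of i] by arith
    also have "\<dots> = K/(t+1)" by (simp add: K_def add_divide_distrib[symmetric])
    also have "\<dots> \<le> \<epsilon>"
    proof -
      have "K/\<epsilon> \<le> t" using tT by simp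
      hence "K \<le> t*\<epsilon>" using \<epsilon> by (simp add: field_simps)
      hence "K \<le> (t+1)*\<epsilon>" using \<epsilon> by (simp add: algebra_simps)
      thus ?thesis using t0 by (simp add: field_simps)
    qed
    finally have fin: "\<bar>g (t *\<^sub>R \<eta> + h) $ i - (t+1)*\<eta>$i - h$i\<bar> \<le> \<epsilon>" .
    have "g (t *\<^sub>R \<eta> + h) = t *\<^sub>R a + c" using hl tT by simp
    hence "g (t *\<^sub>R \<eta> + h) $ i - (t+1)*\<eta>$i - h$i = t*(a$i - \<eta>$i) + (c$i - \<eta>$i - h$i)"
      by (simp add: algebra_simps)
    thus ?thesis using fin by simp
  qed
  have ac: "a$i = \<eta>$i \<and> c$i = \<eta>$i + h$i" for i
  proof -
    have "\<forall>e>0. \<forall>T. \<exists>t\<ge>T. \<bar>t*(a$i - \<eta>$i) + (c$i - \<eta>$i - h$i)\<bar> \<le> e"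
    proof (intro allI impI)
      fix e T :: real assume "e > 0"
      obtain t where "t \<ge> max T (max T0 (max (1/\<delta>) (K/e)))" "P Q t" using Q(2) by blast
      thus "\<exists>t\<ge>T. \<bar>t*(a$i - \<eta>$i) + (c$i - \<eta>$i - h$i)\<bar> \<le> e"
        using key[OF \<open>e > 0\<close>] by (intro exI[of _ t]) auto
    qed
    from lin_zero2[OF this] show ?thesis by simp
  qed
  hence "a = \<eta>" "c = \<eta> + h" by (auto simp: vec_eq_iff)
  hence "\<forall>t\<ge>T0. g (t *\<^sub>R \<eta> + h) = (t+1) *\<^sub>R \<eta> + h" using hl by (simp add: algebra_simps)
  thus ?thesis by blast
qed

end


lemma reach_refl: "reach M i i" by (simp add: reach_def)

lemma reach_step: "reach M i j \<Longrightarrow> M$j$k > 0 \<Longrightarrow> reach M i k"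
  unfolding reach_def by (rule rtrancl_into_rtrancl) auto

lemma reach_trans: "reach M i j \<Longrightarrow> reach M j k \<Longrightarrow> reach M i k"
  unfolding reach_def by (rule rtrancl_trans)

lemma reach_induct:
  assumes "reach M i j" "P i" "\<And>a b. reach M i a \<Longrightarrow> P a \<Longrightarrow> M$a$b > 0 \<Longrightarrow> P b"
  shows "P j"
  using assms(1) unfolding reach_def
proof (induction rule: rtrancl_induct)
  case base then show ?case using assms(2) .
next
  case (step y z) then show ?case using assms(3) unfolding reach_def by auto
qed

lemma harm_step:
  assumes st: "stochastic M" and zero: "\<forall>j. j \<notin> S \<longrightarrow> M$k$j = 0"
    and ge: "\<forall>j\<in>S. m \<le> z$j" and zk: "z$k = m" and sup: "(M *v z)$k \<le> z$k" and pos: "M$k$l > 0"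
  shows "l \<in> S \<and> z$l = m"
proof -
  have lS: "l \<in> S" using zero pos by force
  have terms: "\<forall>j\<in>UNIV. M$k$j * (z$j - m) \<ge> 0"
  proof
    fix j show "M$k$j * (z$j - m) \<ge> 0"
      using zero ge st by (cases "j \<in> S") (auto simp: stochastic_def)
  qed
  have "(\<Sum>j\<in>UNIV. M$k$j * (z$j - m)) = (M *v z)$k - m * (\<Sum>j\<in>UNIV. M$k$j)"
    by (simp add: mv_nth algebra_simps sum_subtractf sum_distrib_left)
  also have "\<dots> = (M *v z)$k - m" using st by (simp add: stochastic_def)
  finally have "(\<Sum>j\<in>UNIV. M$k$j * (z$j - m)) \<le> 0" using sup zk by simp
  hence "(\<Sum>j\<in>UNIV. M$k$j * (z$j - m)) = 0" using terms by (meson antisym sum_nonneg)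
  hence "\<forall>j\<in>UNIV. M$k$j * (z$j - m) = 0" using terms by (simp add: sum_nonneg_eq_0_iff)
  hence "M$k$l * (z$l - m) = 0" by blast
  thus ?thesis using pos lS by simp
qed

lemma rec_harm:
  assumes st: "stochastic M" and rc: "recurrence_class M F" and sup: "\<forall>i\<in>F. (M *v z)$i \<le> z$i"
  shows "\<forall>i\<in>F. (M *v z)$i = z$i"
proof -
  obtain i0 where F: "F = {j. reach M i0 j \<and> reach M j i0}"
    using rc unfolding recurrence_class_def communication_class_def by blast
  have cl: "\<forall>i\<in>F. \<forall>j. j \<notin> F \<longrightarrow> M$i$j = 0" using rc unfolding recurrence_class_def by blast
  have i0: "i0 \<in> F" using F reach_refl by blast
  define m where "m = Min ((\<lambda>j. z$j) ` F)"
  have ge: "\<forall>j\<in>F. m \<le> z$j" by (simp add: m_def)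
  have "m \<in> (\<lambda>j. z$j) ` F" unfolding m_def using i0 by (intro Min_in) auto
  then obtain j0 where j0: "j0 \<in> F" "z$j0 = m" by auto
  have reachm: "k \<in> F \<and> z$k = m" if "reach M j0 k" for k
    using that
  proof (rule reach_induct[where P="\<lambda>k. k \<in> F \<and> z$k = m"])
    show "j0 \<in> F \<and> z$j0 = m" using j0 by simp
    fix a b assume "a \<in> F \<and> z$a = m" "M$a$b > 0"
    thus "b \<in> F \<and> z$b = m" using harm_step[OF st _ ge, of a b] cl sup by blast
  qed
  have allm: "\<forall>j\<in>F. z$j = m"
  proof
    fix j assume "j \<in> F"
    have "reach M j0 i0" using j0 F by blast
    moreover have "reach M i0 j" using \<open>j \<in> F\<close> F by blast
    ultimately show "z$j = m" using reachm reach_trans by blast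
  qed
  show ?thesis
  proof
    fix i assume iF: "i \<in> F"
    have "(M *v z)$i = (\<Sum>j\<in>UNIV. M$i$j * m)"
      unfolding mv_nth
    proof (rule sum.cong)
      fix j show "M$i$j * z$j = M$i$j * m" using allm cl iF by (cases "j \<in> F") auto
    qed simp
    also have "\<dots> = m" using st by (simp add: stochastic_def sum_distrib_right[symmetric])
    finally show "(M *v z)$i = z$i" using allm iF by simp
  qed
qed

lemma min_rec:
  assumes st: "stochastic M" and sup: "\<forall>i. (M *v w)$i \<le> w$i"
  shows "\<exists>F j. recurrence_class M F \<and> j \<in> F \<and> (\<forall>i. w$j \<le> w$i)"
proof -
  define m where "m = Min (range (\<lambda>j. w$j))"
  have ge: "\<forall>j\<in>UNIV. m \<le> w$j" by (simp add: m_def)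
  have "m \<in> range (\<lambda>j. w$j)" unfolding m_def by (intro Min_in) auto
  then obtain j0 where j0: "w$j0 = m" by auto
  have reachm: "w$k = m" if "reach M j0 k" for k
    using that
  proof (rule reach_induct[where P="\<lambda>k. w$k = m"])
    show "w$j0 = m" by (rule j0)
    fix a b assume "w$a = m" "M$a$b > 0"
    thus "w$b = m" using harm_step[OF st _ ge, of a b] sup by blast
  qed
  obtain k0 where k0: "reach M j0 k0" "\<forall>k. reach M j0 k \<longrightarrow> card {l. reach M k0 l} \<le> card {l. reach M k l}"
    using ex_has_least_nat[of "\<lambda>k. reach M j0 k" j0 "\<lambda>k. card {l. reach M k l}"] reach_refl by blast
  have bk: "reach M l k0" if "reach M k0 l" for l
  proof -
    have sub: "{l'. reach M l l'} \<subseteq> {l'. reach M k0 l'}" using that reach_trans by blast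
    have "card {l'. reach M k0 l'} \<le> card {l'. reach M l l'}" using k0 that reach_trans by blast
    moreover have "card {l'. reach M l l'} \<le> card {l'. reach M k0 l'}" using sub by (intro card_mono) auto
    ultimately have "card {l'. reach M l l'} = card {l'. reach M k0 l'}" by simp
    hence "{l'. reach M l l'} = {l'. reach M k0 l'}" using sub by (intro card_subset_eq) auto
    thus ?thesis using reach_refl by blast
  qed
  define F where "F = {l. reach M k0 l \<and> reach M l k0}"
  have cc: "communication_class M F" unfolding communication_class_def F_def by blast
  have cl: "\<forall>i\<in>F. \<forall>j. j \<notin> F \<longrightarrow> M$i$j = 0"
  proof (intro ballI allI impI)
    fix i j assume "i \<in> F" "j \<notin> F"
    show "M$i$j = 0"
    proof (rule ccontr)
      assume "M$i$j \<noteq> 0"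
      hence "M$i$j > 0" using st by (simp add: stochastic_def less_le)
      hence "reach M k0 j" using \<open>i \<in> F\<close> reach_step by (auto simp: F_def)
      hence "j \<in> F" using bk by (simp add: F_def)
      thus False using \<open>j \<notin> F\<close> by simp
    qed
  qed
  have rs: "\<forall>i\<in>F. (\<Sum>j\<in>F. M$i$j) = 1"
  proof
    fix i assume "i \<in> F"
    have "(\<Sum>j\<in>F. M$i$j) = (\<Sum>j\<in>UNIV. M$i$j)"
      using cl \<open>i \<in> F\<close> by (intro sum.mono_neutral_left) auto
    thus "(\<Sum>j\<in>F. M$i$j) = 1" using st by (simp add: stochastic_def)
  qed
  have "recurrence_class M F" using cc cl rs by (simp add: recurrence_class_def)
  moreover have "k0 \<in> F" using reach_refl by (simp add: F_def)
  moreover have "\<forall>i. w$k0 \<le> w$i" using reachm[OF k0(1)] ge by simp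
  ultimately show ?thesis by blast
qed



lemma bounded_over_n:
  fixes u :: "nat \<Rightarrow> real"
  assumes "\<forall>k. \<bar>u k\<bar> \<le> C"
  shows "(\<lambda>k. u k / real k) \<longlonglongrightarrow> 0"
proof (rule Lim_null_comparison)
  show "(\<lambda>k. C / real k) \<longlonglongrightarrow> 0" by (rule lim_const_over_n)
  show "\<forall>\<^sub>F k in sequentially. norm (u k / real k) \<le> C / real k"
    using assms by (intro always_eventually allI) (simp add: abs_divide divide_right_mono)
qed

lemma ev_large: "eventually P (at_top :: real filter) \<Longrightarrow> \<exists>t\<ge>T. P t"
  unfolding eventually_at_top_linorder by (metis max.cobounded1 max.cobounded2)

context opah
begin

lemma iter_ne:
  assumes "\<forall>j. \<bar>x$j - y$j\<bar> \<le> D"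
  shows "\<forall>j. \<bar>(g^^k) x $ j - (g^^k) y $ j\<bar> \<le> D"
proof (induction k)
  case 0 then show ?case using assms by simp
next
  case (Suc k) then show ?case using ne by simp
qed

lemma inv_cycle:
  assumes inv: "\<forall>t\<ge>T. g (t *\<^sub>R \<eta> + h) = (t+1) *\<^sub>R \<eta> + h"
  shows "(\<lambda>k. (1 / real k) *\<^sub>R (g ^^ k) x) \<longlonglongrightarrow> \<eta>"
proof -
  have it: "(g^^k) (t *\<^sub>R \<eta> + h) = (t + real k) *\<^sub>R \<eta> + h" if "t \<ge> T" for t k
  proof (induction k)
    case 0 then show ?case by simp
  next
    case (Suc k)
    have "(g^^Suc k) (t *\<^sub>R \<eta> + h) = g ((t + real k) *\<^sub>R \<eta> + h)" using Suc by simp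
    also have "\<dots> = (t + real k + 1) *\<^sub>R \<eta> + h" using inv that by simp
    finally show ?case by (simp add: add.assoc)
  qed
  define y where "y = T *\<^sub>R \<eta> + h"
  obtain D where D: "\<forall>j. \<bar>(x - y)$j\<bar> \<le> D" using maxabs by blast
  have wb: "\<forall>j. \<bar>(g^^k) x $ j - (g^^k) y $ j\<bar> \<le> D" for k using iter_ne D by simp
  show ?thesis
  proof (rule vec_tendstoI)
    fix i
    define u where "u k = T * \<eta>$i + h$i + ((g^^k) x $ i - (g^^k) y $ i)" for k
    have ub: "\<forall>k. \<bar>u k\<bar> \<le> \<bar>T * \<eta>$i + h$i\<bar> + D"
      using wb unfolding u_def by (metis abs_triangle_ineq add_left_mono order_trans)
    have "(\<lambda>k. \<eta>$i + u k / real k) \<longlonglongrightarrow> \<eta>$i + 0"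
      by (intro tendsto_add tendsto_const bounded_over_n[OF ub])
    moreover have "\<forall>\<^sub>F k in sequentially. \<eta>$i + u k / real k = ((1 / real k) *\<^sub>R (g ^^ k) x) $ i"
      using eventually_ge_at_top[of "1::nat"]
    proof eventually_elim
      case (elim k)
      have "(g^^k) y $ i = (T + real k) * \<eta>$i + h$i" using it[of T k] by (simp add: y_def)
      hence "(g^^k) x $ i = real k * \<eta>$i + u k" by (simp add: u_def algebra_simps)
      thus ?case using elim by (simp add: field_simps)
    qed
    ultimately show "((\<lambda>k. ((1 / real k) *\<^sub>R (g ^^ k) x) $ i) \<longlongrightarrow> \<eta> $ i) sequentially"
      using Lim_transform_eventually by fastforce
  qed
qed

lemma cycle_eq:
  assumes inv: "\<forall>t\<ge>T. g (t *\<^sub>R \<eta> + h) = (t+1) *\<^sub>R \<eta> + h"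
  shows "cycle_time g = \<eta>"
  unfolding cycle_time_def
proof (rule the_equality)
  show "\<forall>x. (\<lambda>k. (1 / real k) *\<^sub>R (g ^^ k) x) \<longlonglongrightarrow> \<eta>" using inv_cycle[OF inv] by blast
  fix \<eta>' assume "\<forall>x. (\<lambda>k. (1 / real k) *\<^sub>R (g ^^ k) x) \<longlonglongrightarrow> \<eta>'"
  thus "\<eta>' = \<eta>" using inv_cycle[OF inv, of 0] LIMSEQ_unique by blast
qed

lemma cyc: "\<exists>h T. \<forall>t\<ge>T. g (t *\<^sub>R cycle_time g + h) = (t+1) *\<^sub>R cycle_time g + h"
  using inv_exists cycle_eq by metis

lemma rec_cyc: "recession g (cycle_time g) = cycle_time g"
proof -
  obtain h T where inv: "\<forall>t\<ge>T. g (t *\<^sub>R cycle_time g + h) = (t+1) *\<^sub>R cycle_time g + h" using cyc by blast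
  have "\<forall>\<^sub>F t in at_top. g (t *\<^sub>R cycle_time g + h) = t *\<^sub>R recession g (cycle_time g) + tangent_at_infinity g (cycle_time g) h"
    by (rule HL)
  then obtain T' where T': "\<forall>t\<ge>T'. g (t *\<^sub>R cycle_time g + h) = t *\<^sub>R recession g (cycle_time g) + tangent_at_infinity g (cycle_time g) h"
    unfolding eventually_at_top_linorder by blast
  define t where "t = max T T'"
  have tT: "t \<ge> T" "t \<ge> T'" "t + 1 \<ge> T" "t + 1 \<ge> T'" by (auto simp: t_def)
  have "t *\<^sub>R recession g (cycle_time g) + tangent_at_infinity g (cycle_time g) h = (t+1) *\<^sub>R cycle_time g + h"
    using inv[rule_format, OF tT(1)] T'[rule_format, OF tT(2)] by simp
  moreover have "(t+1) *\<^sub>R recession g (cycle_time g) + tangent_at_infinity g (cycle_time g) h = (t+1+1) *\<^sub>R cycle_time g + h"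
    using inv[rule_format, OF tT(3)] T'[rule_format, OF tT(4)] by simp
  ultimately have "((t+1) *\<^sub>R recession g (cycle_time g) + tangent_at_infinity g (cycle_time g) h)
      - (t *\<^sub>R recession g (cycle_time g) + tangent_at_infinity g (cycle_time g) h)
      = ((t+1+1) *\<^sub>R cycle_time g + h) - ((t+1) *\<^sub>R cycle_time g + h)" by simp
  moreover have "((t+1) *\<^sub>R recession g (cycle_time g) + tangent_at_infinity g (cycle_time g) h)
      - (t *\<^sub>R recession g (cycle_time g) + tangent_at_infinity g (cycle_time g) h) = recession g (cycle_time g)"
    by (simp add: algebra_simps)
  moreover have "((t+1+1) *\<^sub>R cycle_time g + h) - ((t+1) *\<^sub>R cycle_time g + h) = cycle_time g"
    by (simp add: vec_eq_iff algebra_simps)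
  ultimately show ?thesis by simp
qed

lemma phi_eq: "\<forall>\<^sub>F t in at_top. g (t *\<^sub>R cycle_time g + y) = (t+1) *\<^sub>R cycle_time g + gbar g y"
  using HL[of "cycle_time g" y] by eventually_elim (simp add: rec_cyc gbar_def algebra_simps)

lemma phi_common: "\<exists>t\<ge>T. g (t *\<^sub>R cycle_time g + x) = (t+1) *\<^sub>R cycle_time g + gbar g x
                      \<and> g (t *\<^sub>R cycle_time g + y) = (t+1) *\<^sub>R cycle_time g + gbar g y"
  by (rule ev_large) (rule eventually_conj[OF phi_eq phi_eq])

lemma phi_mono: "x \<le> y \<Longrightarrow> gbar g x \<le> gbar g y"
proof -
  assume "x \<le> y"
  obtain t where t: "g (t *\<^sub>R cycle_time g + x) = (t+1) *\<^sub>R cycle_time g + gbar g x"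
                  "g (t *\<^sub>R cycle_time g + y) = (t+1) *\<^sub>R cycle_time g + gbar g y"
    using phi_common by blast
  have "t *\<^sub>R cycle_time g + x \<le> t *\<^sub>R cycle_time g + y" using \<open>x \<le> y\<close> by (simp add: less_eq_vec_def)
  hence "g (t *\<^sub>R cycle_time g + x) \<le> g (t *\<^sub>R cycle_time g + y)" by (rule mono)
  thus ?thesis unfolding t by (simp add: less_eq_vec_def)
qed

lemma phi_hom: "gbar g (cvec c + y) = cvec c + gbar g y"
proof -
  obtain t where t: "g (t *\<^sub>R cycle_time g + (cvec c + y)) = (t+1) *\<^sub>R cycle_time g + gbar g (cvec c + y)"
                  "g (t *\<^sub>R cycle_time g + y) = (t+1) *\<^sub>R cycle_time g + gbar g y"
    using phi_common by blast
  have "g (t *\<^sub>R cycle_time g + (cvec c + y)) = cvec c + g (t *\<^sub>R cycle_time g + y)"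
    using hom[of c "t *\<^sub>R cycle_time g + y"] by (simp add: algebra_simps)
  thus ?thesis unfolding t by (simp add: algebra_simps)
qed

lemma phi_ne:
  assumes "\<forall>j. \<bar>x$j - y$j\<bar> \<le> c"
  shows "\<bar>gbar g x $ i - gbar g y $ i\<bar> \<le> c"
proof -
  obtain t where t: "g (t *\<^sub>R cycle_time g + x) = (t+1) *\<^sub>R cycle_time g + gbar g x"
                  "g (t *\<^sub>R cycle_time g + y) = (t+1) *\<^sub>R cycle_time g + gbar g y"
    using phi_common by blast
  have "\<bar>g (t *\<^sub>R cycle_time g + x) $ i - g (t *\<^sub>R cycle_time g + y) $ i\<bar> \<le> c"
    using assms by (intro ne) simp
  thus ?thesis unfolding t by simp
qed

lemma phi_cont: "isCont (gbar g) x"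
proof (rule continuous_at_eps_delta[THEN iffD2], intro allI impI)
  fix e :: real assume e: "e > 0"
  show "\<exists>d>0. \<forall>x'. dist x' x < d \<longrightarrow> dist (gbar g x') (gbar g x) < e"
  proof (intro exI[of _ "e / (real CARD('n) + 1)"] conjI allI impI)
    show "e / (real CARD('n) + 1) > 0" using e by simp
    fix x' assume "dist x' x < e / (real CARD('n) + 1)"
    hence lt: "norm (x' - x) * (real CARD('n) + 1) < e" by (simp add: dist_norm field_simps)
    have "norm (gbar g x' - gbar g x) \<le> (\<Sum>i\<in>UNIV. \<bar>(gbar g x' - gbar g x)$i\<bar>)" by (rule norm_le_l1_cart)
    also have "\<dots> \<le> (\<Sum>i\<in>(UNIV::'n set). norm (x' - x))"
      by (rule sum_mono) (simp add: phi_ne component_le_norm_cart[of "x' - x", simplified])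
    also have "\<dots> = real CARD('n) * norm (x' - x)" by simp
    also have "\<dots> \<le> norm (x' - x) * (real CARD('n) + 1)" by (simp add: algebra_simps)
    finally show "dist (gbar g x') (gbar g x) < e" using lt by (simp add: dist_norm)
  qed
qed

lemma inv_iff: "invariant_halfline g (cycle_time g) u \<longleftrightarrow> gbar g u = u"
proof
  assume "invariant_halfline g (cycle_time g) u"
  hence "\<forall>\<^sub>F t in at_top. g (t *\<^sub>R cycle_time g + u) = (t + 1) *\<^sub>R cycle_time g + u"
    by (simp add: invariant_halfline_def)
  from ev_large[OF eventually_conj[OF this phi_eq[of u]], of 0] obtain t where
    "g (t *\<^sub>R cycle_time g + u) = (t + 1) *\<^sub>R cycle_time g + u"
    "g (t *\<^sub>R cycle_time g + u) = (t+1) *\<^sub>R cycle_time g + gbar g u" by blast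
  thus "gbar g u = u" by simp
next
  assume "gbar g u = u"
  thus "invariant_halfline g (cycle_time g) u"
    unfolding invariant_halfline_def using phi_eq[of u] by simp
qed

lemma super_phi: "super_invariant_halfline g (cycle_time g) v \<Longrightarrow> gbar g v \<le> v"
proof -
  assume "super_invariant_halfline g (cycle_time g) v"
  hence "\<forall>\<^sub>F t in at_top. g (t *\<^sub>R cycle_time g + v) \<le> (t + 1) *\<^sub>R cycle_time g + v"
    by (simp add: super_invariant_halfline_def)
  from ev_large[OF eventually_conj[OF this phi_eq[of v]], of 0] obtain t where
    "g (t *\<^sub>R cycle_time g + v) \<le> (t + 1) *\<^sub>R cycle_time g + v"
    "g (t *\<^sub>R cycle_time g + v) = (t+1) *\<^sub>R cycle_time g + gbar g v" by blast
  thus "gbar g v \<le> v" by (simp add: less_eq_vec_def)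
qed

lemma subgrad: "\<exists>M. M \<in> subdiff (gbar g) u"
proof -
  obtain R where R: "finite R" "\<forall>(A,b)\<in>R. stochastic A \<and> (\<forall>y. A *v y + b \<le> g y)"
      "\<forall>x. \<exists>(A,b)\<in>R. g x = A *v x + b" using rep by blast
  have "\<forall>t\<ge>0. \<exists>Q\<in>R. g (t *\<^sub>R cycle_time g + u) = fst Q *v (t *\<^sub>R cycle_time g + u) + snd Q"
  proof (intro allI impI)
    fix t :: real
    obtain A b where "(A,b) \<in> R" "g (t *\<^sub>R cycle_time g + u) = A *v (t *\<^sub>R cycle_time g + u) + b"
      using R(3) by blast
    thus "\<exists>Q\<in>R. g (t *\<^sub>R cycle_time g + u) = fst Q *v (t *\<^sub>R cycle_time g + u) + snd Q"
      by (intro bexI[of _ "(A,b)"]) auto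
  qed
  from pigeon[OF R(1) this] obtain Q where Q: "Q \<in> R"
    "\<forall>T. \<exists>t\<ge>T. g (t *\<^sub>R cycle_time g + u) = fst Q *v (t *\<^sub>R cycle_time g + u) + snd Q" by blast
  obtain A b where Qab: "Q = (A, b)" by (cases Q)
  have st: "stochastic A" and sup: "\<forall>y. A *v y + b \<le> g y" using R(2) Q(1) Qab by auto
  have "gbar g x - gbar g u \<ge> A *v (x - u)" for x
  proof -
    obtain T where T: "\<forall>t\<ge>T. g (t *\<^sub>R cycle_time g + x) = (t+1) *\<^sub>R cycle_time g + gbar g x
                      \<and> g (t *\<^sub>R cycle_time g + u) = (t+1) *\<^sub>R cycle_time g + gbar g u"
      using eventually_conj[OF phi_eq[of x] phi_eq[of u]] unfolding eventually_at_top_linorder by blast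
    obtain t where t: "t \<ge> T" "g (t *\<^sub>R cycle_time g + u) = A *v (t *\<^sub>R cycle_time g + u) + b"
      using Q(2) Qab by auto
    have gx: "g (t *\<^sub>R cycle_time g + x) = (t+1) *\<^sub>R cycle_time g + gbar g x"
      and gu: "g (t *\<^sub>R cycle_time g + u) = (t+1) *\<^sub>R cycle_time g + gbar g u" using T t(1) by auto
    have s1: "A *v (t *\<^sub>R cycle_time g + x) + b \<le> g (t *\<^sub>R cycle_time g + x)" using sup by blast
    have s2: "A *v (t *\<^sub>R cycle_time g + x) = A *v (t *\<^sub>R cycle_time g + u) + A *v (x - u)"
      by (simp add: matrix_vector_right_distrib matrix_vector_mult_diff_distrib)
    show ?thesis unfolding less_eq_vec_def
    proof
      fix i
      have "(A *v (t *\<^sub>R cycle_time g + u)) $ i + (A *v (x - u)) $ i + b $ i \<le> (t+1) * cycle_time g $ i + gbar g x $ i"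
        using s1 unfolding s2 gx less_eq_vec_def by simp
      moreover have "(A *v (t *\<^sub>R cycle_time g + u)) $ i + b $ i = (t+1) * cycle_time g $ i + gbar g u $ i"
        using t(2) gu by (metis vector_add_component vector_scaleR_component real_scaleR_def)
      ultimately show "(A *v (x - u)) $ i \<le> (gbar g x - gbar g u) $ i" by simp
    qed
  qed
  thus ?thesis using st unfolding subdiff_def by blast
qed

lemma crit_preserve:
  assumes i: "i \<in> critical_nodes g" and y: "gbar g y \<le> y"
  shows "gbar g y $ i = y $ i"
proof -
  obtain u M F where u: "gbar g u = u" "M \<in> subdiff (gbar g) u" "recurrence_class M F" "i \<in> F"
    using i unfolding critical_nodes_def critical_nodes_of_def by blast
  have st: "stochastic M" and sg: "gbar g y - gbar g u \<ge> M *v (y - u)" using u(2) by (auto simp: subdiff_def)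
  have le: "(M *v (y - u))$j \<le> gbar g y $ j - u $ j" for j using sg u(1) by (simp add: less_eq_vec_def)
  have le2: "gbar g y $ j \<le> y $ j" for j using y by (simp add: less_eq_vec_def)
  have "\<forall>j\<in>F. (M *v (y - u))$j \<le> (y - u)$j"
  proof
    fix j
    have "gbar g y $ j - u $ j \<le> y $ j - u $ j" using le2[of j] by simp
    thus "(M *v (y - u))$j \<le> (y - u)$j" using le[of j] by simp
  qed
  from rec_harm[OF st u(3) this] u(4) have "(M *v (y - u))$i = (y - u)$i" by blast
  thus ?thesis using le[of i] le2[of i] by simp
qed

lemma fix_le:
  assumes p: "gbar g p = p" and q: "gbar g q = q" and agree: "\<forall>i\<in>critical_nodes g. p$i = q$i"
  shows "q \<le> p"
proof -
  obtain M where M: "M \<in> subdiff (gbar g) q" using subgrad by blast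
  have st: "stochastic M" and sg: "gbar g p - gbar g q \<ge> M *v (p - q)" using M by (auto simp: subdiff_def)
  have "\<forall>i. (M *v (p - q))$i \<le> (p - q)$i" using sg p q by (simp add: less_eq_vec_def)
  from min_rec[OF st this] obtain F j where Fj: "recurrence_class M F" "j \<in> F" "\<forall>i. (p - q)$j \<le> (p - q)$i" by blast
  have "j \<in> critical_nodes g" unfolding critical_nodes_def critical_nodes_of_def using q M Fj by blast
  hence "(p - q)$j = 0" using agree by simp
  thus ?thesis using Fj(3) by (simp add: less_eq_vec_def)
qed

end


theorem corollary3p4:
  fixes g :: "real^'n \<Rightarrow> real^'n" and v :: "real^'n"
  assumes "polyhedral_map g" and "coord_convex g"
    and "order_preserving g" and "additively_homogeneous g"
    and "super_invariant_halfline g (cycle_time g) v"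
  shows "\<exists>u. ((\<lambda>k. (gbar g ^^ k) v) \<longlonglongrightarrow> u)
           \<and> invariant_halfline g (cycle_time g) u
           \<and> (\<forall>\<^sub>F t in at_top. \<forall>i\<in>critical_nodes g.
                 (t *\<^sub>R cycle_time g + u) $ i = (t *\<^sub>R cycle_time g + v) $ i)
           \<and> (\<forall>\<eta>' u'. invariant_halfline g \<eta>' u'
                 \<and> (\<forall>\<^sub>F t in at_top. \<forall>i\<in>critical_nodes g.
                      (t *\<^sub>R \<eta>' + u') $ i = (t *\<^sub>R cycle_time g + v) $ i)
                 \<longrightarrow> \<eta>' = cycle_time g \<and> u' = u)"
proof -
  interpret opah g using assms(1-4) by unfold_locales
  obtain h T where inv: "\<forall>t\<ge>T. g (t *\<^sub>R cycle_time g + h) = (t+1) *\<^sub>R cycle_time g + h"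
    using cyc by blast
  have "invariant_halfline g (cycle_time g) h"
    unfolding invariant_halfline_def eventually_at_top_linorder using inv by blast
  hence fixh: "gbar g h = h" using inv_iff by blast
  have sv: "gbar g v \<le> v" using super_phi assms(5) by blast
  define y where "y k = (gbar g ^^ k) v" for k
  have dec: "y (Suc k) \<le> y k" for k
  proof (induction k)
    case 0 then show ?case using sv by (simp add: y_def)
  next
    case (Suc k) then show ?case using phi_mono by (simp add: y_def)
  qed
  obtain c where c: "\<forall>j. \<bar>(h - v)$j\<bar> \<le> c" using maxabs by blast
  have low: "h \<le> cvec c + y k" for k
  proof (induction k)
    case 0
    have "h$j \<le> c + v$j" for j using c[rule_format, of j] by (simp add: abs_le_iff)
    thus ?case by (simp add: y_def less_eq_vec_def)
  next
    case (Suc k)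
    have "gbar g h \<le> gbar g (cvec c + y k)" using Suc by (rule phi_mono)
    thus ?case using fixh by (simp add: phi_hom y_def)
  qed
  define u where "u = (\<chi> i. INF k. y k $ i)"
  have "(\<lambda>k. y k $ i) \<longlonglongrightarrow> u $ i" for i
  proof -
    have "decseq (\<lambda>k. y k $ i)" using dec by (intro decseq_SucI) (simp add: less_eq_vec_def)
    moreover have "bdd_below (range (\<lambda>k. y k $ i))"
    proof (rule bdd_belowI[of _ "h$i - c"])
      fix x assume "x \<in> range (\<lambda>k. y k $ i)"
      then obtain k where k: "x = y k $ i" by blast
      have "h $ i \<le> c + y k $ i" using low[of k] by (simp add: less_eq_vec_def)
      thus "h$i - c \<le> x" using k by simp
    qed
    ultimately show ?thesis unfolding u_def using LIMSEQ_decseq_INF by simp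
  qed
  hence yu: "y \<longlonglongrightarrow> u" by (intro vec_tendstoI)
  have "(\<lambda>k. gbar g (y k)) \<longlonglongrightarrow> gbar g u" using phi_cont yu by (rule isCont_tendsto_compose)
  moreover have "(\<lambda>k. gbar g (y k)) \<longlonglongrightarrow> u" using LIMSEQ_Suc[OF yu] by (simp add: y_def)
  ultimately have fixu: "gbar g u = u" using LIMSEQ_unique by blast
  have crit_y: "y k $ i = v $ i" if i: "i \<in> critical_nodes g" for i k
  proof (induction k)
    case 0 then show ?case by (simp add: y_def)
  next
    case (Suc k)
    have "gbar g (y k) $ i = y k $ i" using crit_preserve[OF i] dec[of k] by (simp add: y_def)
    thus ?case using Suc by (simp add: y_def)
  qed
  have crit_u: "u $ i = v $ i" if i: "i \<in> critical_nodes g" for i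
  proof -
    have "(\<lambda>k. y k $ i) \<longlonglongrightarrow> u $ i" using yu by (rule tendsto_vec_nth)
    moreover have "(\<lambda>k. y k $ i) \<longlonglongrightarrow> v $ i" using crit_y[OF i] by simp
    ultimately show ?thesis using LIMSEQ_unique by blast
  qed
  show ?thesis
  proof (intro exI[of _ u] conjI allI impI)
    show "(\<lambda>k. (gbar g ^^ k) v) \<longlonglongrightarrow> u" using yu by (simp add: y_def[abs_def])
    show "invariant_halfline g (cycle_time g) u" using fixu inv_iff by blast
    show "\<forall>\<^sub>F t in at_top. \<forall>i\<in>critical_nodes g.
                 (t *\<^sub>R cycle_time g + u) $ i = (t *\<^sub>R cycle_time g + v) $ i"
      using crit_u by (intro always_eventually) simp
    fix \<eta>' u'
    assume a: "invariant_halfline g \<eta>' u' \<and> (\<forall>\<^sub>F t in at_top. \<forall>i\<in>critical_nodes g.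
                      (t *\<^sub>R \<eta>' + u') $ i = (t *\<^sub>R cycle_time g + v) $ i)"
    obtain T' where T': "\<forall>t\<ge>T'. g (t *\<^sub>R \<eta>' + u') = (t+1) *\<^sub>R \<eta>' + u'"
      using a unfolding invariant_halfline_def eventually_at_top_linorder by blast
    have eta: "cycle_time g = \<eta>'" using cycle_eq[OF T'] .
    thus "\<eta>' = cycle_time g" by simp
    have fixu': "gbar g u' = u'" using a eta inv_iff by blast
    obtain t where t: "\<forall>i\<in>critical_nodes g. (t *\<^sub>R \<eta>' + u') $ i = (t *\<^sub>R cycle_time g + v) $ i"
      using a ev_large by blast
    have agree: "\<forall>i\<in>critical_nodes g. u' $ i = u $ i" using t crit_u eta by simp
    have "u \<le> u'" using fix_le[OF fixu' fixu] agree by simp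
    moreover have "u' \<le> u" using fix_le[OF fixu fixu'] agree by simp
    ultimately show "u' = u" unfolding vec_eq_iff less_eq_vec_def by (meson order_antisym)
  qed
qed


end
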